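(* Let $\mathfrak g$ be a Lie algebra with a classical $r$-matrix $R$. For every $A\in\mathcal U(\mathfrak g)$ there is a unique $A'\in\mathcal U(\mathfrak g_R)$ such that $$A=R_+(A'_{(1)})\,S_{\mathfrak g}\big(R_-(A'_{(2)})\big),$$ where $\Delta_{\mathfrak g_R}(A')=A'_{(1)}\otimes A'_{(2)}$ in Sweedler notation.
   Context: All vector spaces are finite dimensional over $\mathbb K=\mathbb R$ or $\mathbb C$. Let $\mathfrak g=(V,[\cdot,\cdot])$ be a Lie algebra. A classical $r$-matrix is a linear map $R:V\to V$ satisfying $[Rx,Ry]=R([Rx,y]+[x,Ry])-[x,y]$ for all $x,y$. Then $[x,y]_R:=\frac12([Rx,y]+[x,Ry])$ is a Lie bracket; $\mathfrak g_R:=(V,[\cdot,\cdot]_R)$. The maps $R_\pm:=\frac12(R\pm\mathrm{id})$ are Lie algebra morphisms $\mathfrak g_R\to\mathfrak g$, extended (same notation) to unital algebra morphisms $\mathcal U(\mathfrak g_R)\to\mathcal U(\mathfrak g)$. $\Delta_{\mathfrak g_R}$ is the coproduct of $\mathcal U(\mathfrak g_R)$ (elements of $V$ primitive); $S_{\mathfrak g}$ is the antipode of $\mathcal U(\mathfrak g)$, $S_{\mathfrak g}(x_1\cdots x_n)=(-1)^nx_n\cdots x_1$. *)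

theory Defs
  imports Complex_Main
begin

text \<open>
  The Lie algebra is V = ('i => 'k) for a finite basis index type 'i
  (so dim V = CARD('i), arbitrary), with a bilinear Lie bracket br.
  The tensor algebra T(V) is realised as the free associative algebra on the basis:
  finitely supported functions 'i list => 'k (coefficient of each basis word).
  U(g) = T(V) / I_g, with I_g the two-sided ideal generated by x y - y x - [x,y];
  elements of U(g) are represented by elements of T(V), equality in U(g) is
  congruence modulo I_g.
\<close>

definition vbasis :: "'i \<Rightarrow> ('i \<Rightarrow> 'k::comm_ring_1)" where
  "vbasis i = (\<lambda>j. if j = i then 1 else 0)"

definition klinear :: "(('i \<Rightarrow> 'k::comm_ring_1) \<Rightarrow> ('j \<Rightarrow> 'k)) \<Rightarrow> bool" where
  "klinear f \<longleftrightarrow> (\<forall>x y. f (\<lambda>i. x i + y i) = (\<lambda>j. f x j + f y j)) \<and>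
                  (\<forall>c x. f (\<lambda>i. c * x i) = (\<lambda>j. c * f x j))"

definition lie_bracket ::
  "(('i \<Rightarrow> 'k::comm_ring_1) \<Rightarrow> ('i \<Rightarrow> 'k) \<Rightarrow> ('i \<Rightarrow> 'k)) \<Rightarrow> bool" where
  "lie_bracket br \<longleftrightarrow>
     (\<forall>x. klinear (br x)) \<and> (\<forall>y. klinear (\<lambda>x. br x y)) \<and>
     (\<forall>x. br x x = (\<lambda>_. 0)) \<and>
     (\<forall>x y z. (\<lambda>i. br x (br y z) i + br y (br z x) i + br z (br x y) i) = (\<lambda>_. 0))"

definition classical_r_matrix ::
  "(('i \<Rightarrow> 'k::comm_ring_1) \<Rightarrow> ('i \<Rightarrow> 'k) \<Rightarrow> ('i \<Rightarrow> 'k)) \<Rightarrow> (('i \<Rightarrow> 'k) \<Rightarrow> ('i \<Rightarrow> 'k)) \<Rightarrow> bool" where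
  "classical_r_matrix br R \<longleftrightarrow> klinear R \<and>
     (\<forall>x y. br (R x) (R y) =
        (\<lambda>i. R (\<lambda>j. br (R x) y j + br x (R y) j) i - br x y i))"

definition bracket_R where
  "bracket_R br R x y = (\<lambda>i. (br (R x) y i + br x (R y) i) / (2::'k::field))"

definition R_plus where "R_plus R x = (\<lambda>i. (R x i + x i) / (2::'k::field))"
definition R_minus where "R_minus R x = (\<lambda>i. (R x i - x i) / (2::'k::field))"

definition fsupp :: "('i list \<Rightarrow> 'k::zero) \<Rightarrow> bool" where
  "fsupp p \<longleftrightarrow> finite {w. p w \<noteq> 0}"

definition fa_one :: "'i list \<Rightarrow> 'k::comm_ring_1" where
  "fa_one = (\<lambda>w. if w = [] then 1 else 0)"

definition fa_add :: "('i list \<Rightarrow> 'k::comm_ring_1) \<Rightarrow> ('i list \<Rightarrow> 'k) \<Rightarrow> ('i list \<Rightarrow> 'k)" where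
  "fa_add p q = (\<lambda>w. p w + q w)"

definition fa_diff :: "('i list \<Rightarrow> 'k::comm_ring_1) \<Rightarrow> ('i list \<Rightarrow> 'k) \<Rightarrow> ('i list \<Rightarrow> 'k)" where
  "fa_diff p q = (\<lambda>w. p w - q w)"

definition fa_mult :: "('i list \<Rightarrow> 'k::comm_ring_1) \<Rightarrow> ('i list \<Rightarrow> 'k) \<Rightarrow> ('i list \<Rightarrow> 'k)" where
  "fa_mult p q = (\<lambda>w. \<Sum>k\<le>length w. p (take k w) * q (drop k w))"

definition fa_emb :: "('i \<Rightarrow> 'k::comm_ring_1) \<Rightarrow> ('i list \<Rightarrow> 'k)" where
  "fa_emb v = (\<lambda>w. case w of [i] \<Rightarrow> v i | _ \<Rightarrow> 0)"

inductive_set fa_ideal :: "('i list \<Rightarrow> 'k::comm_ring_1) set \<Rightarrow> ('i list \<Rightarrow> 'k) set"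
  for G where
  zero: "(\<lambda>_. 0) \<in> fa_ideal G"
| gen: "g \<in> G \<Longrightarrow> fsupp a \<Longrightarrow> fsupp b \<Longrightarrow> fa_mult (fa_mult a g) b \<in> fa_ideal G"
| add: "p \<in> fa_ideal G \<Longrightarrow> q \<in> fa_ideal G \<Longrightarrow> fa_add p q \<in> fa_ideal G"

definition lie_rel :: "(('i \<Rightarrow> 'k::comm_ring_1) \<Rightarrow> ('i \<Rightarrow> 'k) \<Rightarrow> ('i \<Rightarrow> 'k)) \<Rightarrow> ('i list \<Rightarrow> 'k) set" where
  "lie_rel br = {fa_diff (fa_diff (fa_mult (fa_emb x) (fa_emb y)) (fa_mult (fa_emb y) (fa_emb x)))
                    (fa_emb (br x y)) | x y. True}"

definition ueq :: "(('i \<Rightarrow> 'k::comm_ring_1) \<Rightarrow> ('i \<Rightarrow> 'k) \<Rightarrow> ('i \<Rightarrow> 'k)) \<Rightarrow> ('i list \<Rightarrow> 'k) \<Rightarrow> ('i list \<Rightarrow> 'k) \<Rightarrow> bool" where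
  "ueq br p q \<longleftrightarrow> fa_diff p q \<in> fa_ideal (lie_rel br)"

fun word_hom :: "(('i \<Rightarrow> 'k::comm_ring_1) \<Rightarrow> ('i \<Rightarrow> 'k)) \<Rightarrow> 'i list \<Rightarrow> ('i list \<Rightarrow> 'k)" where
  "word_hom f [] = fa_one"
| "word_hom f (i # w) = fa_mult (fa_emb (f (vbasis i))) (word_hom f w)"

definition antipode :: "('i list \<Rightarrow> 'k::comm_ring_1) \<Rightarrow> ('i list \<Rightarrow> 'k)" where
  "antipode p = (\<lambda>u. (-1) ^ length u * p (rev u))"

text \<open>The map A' |-> R_+(A'_(1)) S_g(R_-(A'_(2))), where the coproduct of a basis word
  w (elements of V primitive) is  Delta(w) = sum over S subset of positions of w|_S (x) w|_{S^c};
  extended linearly.\<close>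
definition factor_map :: "(('i \<Rightarrow> 'k::field) \<Rightarrow> ('i \<Rightarrow> 'k)) \<Rightarrow> ('i list \<Rightarrow> 'k) \<Rightarrow> ('i list \<Rightarrow> 'k)" where
  "factor_map R p = (\<lambda>u. \<Sum>w\<in>{w. p w \<noteq> 0}. p w *
      (\<Sum>S\<in>Pow {..<length w}.
         fa_mult (word_hom (R_plus R) (nths w S))
                 (antipode (word_hom (R_minus R) (nths w ({..<length w} - S)))) u))"

end

theory Submission
  imports Defs "HOL-Library.Poly_Mapping" "HOL-Library.Countable" "HOL-Library.Function_Algebras"
begin


instantiation list :: (type) monoid_add
begin
definition zero_list_def: "zero_list = []"
definition plus_list_def: "plus_list = (@)"
instance by standard (auto simp: zero_list_def plus_list_def)
end

abbreviation lookup where "lookup \<equiv> poly_mapping.lookup"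
abbreviation keys where "keys \<equiv> Poly_Mapping.keys"

lemma nil_zero: "[] = 0" by (simp add: zero_list_def)

definition sc :: "'k \<Rightarrow> ('i list \<Rightarrow>\<^sub>0 'k::comm_ring_1)" where
  "sc c = Poly_Mapping.single [] c"

lemma sc_0[simp]: "sc 0 = 0" by (simp add: sc_def)
lemma sc_1[simp]: "sc 1 = 1" by (simp add: sc_def nil_zero)
lemma sc_mult: "sc a * sc b = sc (a*b)" by (simp add: sc_def mult_single nil_zero)
lemma sc_add: "sc (a+b) = sc a + sc b" by (simp add: sc_def single_add)
lemma sc_diff: "sc (a-b) = sc a - sc b" by (simp add: sc_def single_diff)
lemma sc_uminus: "sc (-a) = - sc a" by (simp add: sc_def single_uminus)

lemma update_single: "a \<notin> keys f \<Longrightarrow> Poly_Mapping.update a b f = Poly_Mapping.single a b + f"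
  by (rule poly_mapping_eqI) (auto simp: lookup_update lookup_add lookup_single in_keys_iff when_def)

lemma pm_induct[case_names zero single]:
  assumes "Q 0" "\<And>P w c. Q P \<Longrightarrow> Q (Poly_Mapping.single w c + P)"
  shows "Q P"
  by (induct P rule: update_induct) (auto simp: update_single assms)

lemma sc_single: "sc c * Poly_Mapping.single w d = Poly_Mapping.single w (c*d)"
  by (simp add: sc_def mult_single nil_zero[symmetric] plus_list_def)
lemma single_sc: "Poly_Mapping.single w d * sc c = Poly_Mapping.single w (d*c)"
  by (simp add: sc_def mult_single nil_zero[symmetric] plus_list_def)

lemma sc_comm: "sc c * P = P * sc c"
  by (induct P rule: pm_induct) (auto simp: distrib_left distrib_right sc_single single_sc mult.commute)

lemma lookup_sc_mult[simp]: "lookup (sc c * P) w = c * lookup P w"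
  by (induct P rule: pm_induct) (auto simp: distrib_left sc_single lookup_add lookup_single when_def)

lemma single_mult_single: "Poly_Mapping.single u a * Poly_Mapping.single v b = Poly_Mapping.single (u@v) (a*b)"
  by (simp add: mult_single plus_list_def)

lemma single_sc_1: "Poly_Mapping.single w c = sc c * Poly_Mapping.single w 1"
  by (simp add: sc_single)

lemma sc_assoc: "sc a * (sc b * P) = sc (a*b) * P"
  by (simp add: sc_mult mult.assoc[symmetric])

lemma sc_left_commute: "P * (sc c * Q) = sc c * (P * Q)"
  by (metis mult.assoc sc_comm)

definition lext :: "('i list \<Rightarrow> ('j list \<Rightarrow>\<^sub>0 'k::comm_ring_1)) \<Rightarrow> ('i list \<Rightarrow>\<^sub>0 'k) \<Rightarrow> ('j list \<Rightarrow>\<^sub>0 'k)" where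
  "lext f P = (\<Sum>w\<in>keys P. sc (lookup P w) * f w)"

lemma lext_superset: "finite S \<Longrightarrow> keys P \<subseteq> S \<Longrightarrow> lext f P = (\<Sum>w\<in>S. sc (lookup P w) * f w)"
  unfolding lext_def
  by (rule sum.mono_neutral_left) (auto simp: in_keys_iff)

lemma lext_add: "lext f (P + Q) = lext f P + lext f Q"
proof -
  let ?S = "keys P \<union> keys Q"
  have "keys (P+Q) \<subseteq> ?S" by (rule keys_add)
  then show ?thesis
    by (simp add: lext_superset[of ?S] lookup_add sc_add distrib_right sum.distrib)
qed

lemma lext_zero[simp]: "lext f 0 = 0" by (simp add: lext_def)

lemma lext_single[simp]: "lext f (Poly_Mapping.single w c) = sc c * f w"
  by (cases "c = 0") (auto simp: lext_def)

lemma lext_sc: "lext f (sc c * P) = sc c * lext f P"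
  by (induct P rule: pm_induct) (auto simp: lext_add distrib_left sc_single sc_mult mult.assoc[symmetric])

lemma lext_uminus: "lext f (- P) = - lext f P"
  using lext_sc[of f "-1" P] by (simp add: sc_uminus)

lemma lext_diff: "lext f (P - Q) = lext f P - lext f Q"
  using lext_add[of f P "-Q"] by (simp add: lext_uminus)

lemma lext_sum: "lext f (sum g S) = (\<Sum>s\<in>S. lext f (g s))"
  by (induct S rule: infinite_finite_induct) (auto simp: lext_add)

lemma lext_id: "lext (\<lambda>w. Poly_Mapping.single w 1) P = P"
  by (induct P rule: pm_induct) (auto simp: lext_add sc_single)

lemma lext_cong: "(\<And>w. w \<in> keys P \<Longrightarrow> f w = g w) \<Longrightarrow> lext f P = lext g P"
  by (simp add: lext_def)

lemma lin_eqI: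
  fixes F G :: "('i list \<Rightarrow>\<^sub>0 'k::comm_ring_1) \<Rightarrow> 'b::ab_group_add"
  assumes "\<And>P Q. F (P + Q) = F P + F Q" "\<And>P Q. G (P + Q) = G P + G Q"
    "\<And>w c. F (Poly_Mapping.single w c) = G (Poly_Mapping.single w c)"
  shows "F P = G P"
proof (induct P rule: pm_induct)
  case zero
  have "F 0 = 0" using assms(1)[of 0 0] by simp
  moreover have "G 0 = 0" using assms(2)[of 0 0] by simp
  ultimately show ?case by simp
next
  case (single P w c) then show ?case using assms by simp
qed

definition deg_le :: "nat \<Rightarrow> ('i list \<Rightarrow>\<^sub>0 'k::zero) \<Rightarrow> bool" where
  "deg_le n P \<longleftrightarrow> (\<forall>w\<in>keys P. length w \<le> n)"

lemma deg_le_0[simp]: "deg_le n 0" by (simp add: deg_le_def)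
lemma deg_le_add: "deg_le n P \<Longrightarrow> deg_le n Q \<Longrightarrow> deg_le n (P + Q)"
  using keys_add[of P Q] by (auto simp: deg_le_def)
lemma deg_le_uminus[simp]: "deg_le n (- P) = deg_le n (P::'i list \<Rightarrow>\<^sub>0 'k::ab_group_add)"
  by (simp add: deg_le_def keys_def)
lemma deg_le_diff: "deg_le n P \<Longrightarrow> deg_le n Q \<Longrightarrow> deg_le n (P - (Q::'i list \<Rightarrow>\<^sub>0 'k::ab_group_add))"
  using deg_le_add[of n P "-Q"] by simp
lemma deg_le_mono: "deg_le m P \<Longrightarrow> m \<le> n \<Longrightarrow> deg_le n P"
  by (auto simp: deg_le_def)
lemma deg_le_single: "length w \<le> n \<Longrightarrow> deg_le n (Poly_Mapping.single w c)"
  by (auto simp: deg_le_def)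
lemma deg_le_mult: "deg_le m P \<Longrightarrow> deg_le n Q \<Longrightarrow> deg_le (m+n) (P * Q)"
  using keys_mult[of P Q] by (fastforce simp: deg_le_def plus_list_def)
lemma deg_le_sc: "deg_le n P \<Longrightarrow> deg_le n (sc c * P)"
  by (auto simp: deg_le_def in_keys_iff)
lemma deg_le_sum: "(\<And>s. s \<in> S \<Longrightarrow> deg_le n (g s)) \<Longrightarrow> deg_le n (sum g S)"
  by (induct S rule: infinite_finite_induct) (auto intro: deg_le_add)
lemma deg_le_lext: "(\<And>w. w \<in> keys P \<Longrightarrow> deg_le n (f w)) \<Longrightarrow> deg_le n (lext f P)"
  unfolding lext_def by (rule deg_le_sum) (auto intro: deg_le_sc)

inductive_set tid :: "'a::ring_1 set \<Rightarrow> 'a set" for G where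
  tid0: "0 \<in> tid G"
| tidg: "g \<in> G \<Longrightarrow> a * g * b \<in> tid G"
| tidadd: "p \<in> tid G \<Longrightarrow> q \<in> tid G \<Longrightarrow> p + q \<in> tid G"

lemma tid_gen: "g \<in> G \<Longrightarrow> g \<in> tid G"
  using tidg[of g G 1 1] by simp

lemma tid_lmult: "p \<in> tid G \<Longrightarrow> c * p \<in> tid G"
  by (induct rule: tid.induct) (auto simp: distrib_left mult.assoc[symmetric] intro: tid.intros)

lemma tid_rmult: "p \<in> tid G \<Longrightarrow> p * c \<in> tid G"
  by (induct rule: tid.induct) (auto simp: distrib_right mult.assoc intro: tid.intros
      simp del: mult.assoc[symmetric] | metis mult.assoc tidg)+

lemma tid_uminus: "p \<in> tid G \<Longrightarrow> - p \<in> tid G"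
  using tid_lmult[of p G "-1"] by simp

lemma tid_diff: "p \<in> tid G \<Longrightarrow> q \<in> tid G \<Longrightarrow> p - q \<in> tid G"
  using tidadd[of p G "-q"] tid_uminus by fastforce

lemma tid_sum: "(\<And>s. s \<in> S \<Longrightarrow> g s \<in> tid G) \<Longrightarrow> sum g S \<in> tid G"
  by (induct S rule: infinite_finite_induct) (auto intro: tid.intros)

lemma tid_lext: "(\<And>w. w \<in> keys P \<Longrightarrow> f w \<in> tid G) \<Longrightarrow> lext f P \<in> tid G"
  unfolding lext_def by (rule tid_sum) (auto intro: tid_lmult)

definition emb :: "('i::finite \<Rightarrow> 'k::comm_ring_1) \<Rightarrow> ('i list \<Rightarrow>\<^sub>0 'k)" where
  "emb v = (\<Sum>i\<in>UNIV. Poly_Mapping.single [i] (v i))"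

lemma emb_add: "emb (x + y) = emb x + emb y"
  by (simp add: emb_def single_add sum.distrib)

lemma emb_smul: "emb (\<lambda>i. c * x i) = sc c * emb x"
  by (simp add: emb_def sum_distrib_left sc_single)

lemma emb_zero[simp]: "emb 0 = 0" by (simp add: emb_def)

lemma emb_uminus: "emb (- x) = - emb x"
  using emb_add[of x "-x"] by (metis add.commute eq_neg_iff_add_eq_0 add.right_inverse emb_zero)

lemma emb_diff: "emb (x - y) = emb x - emb y"
  using emb_add[of x "-y"] by (simp add: emb_uminus)

lemma emb_vbasis: "emb (vbasis i) = Poly_Mapping.single [i] 1"
proof -
  have "emb (vbasis i) = (\<Sum>j\<in>UNIV. if j = i then Poly_Mapping.single [i] 1 else 0)"
    unfolding emb_def vbasis_def by (rule sum.cong) auto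
  then show ?thesis by simp
qed

lemma fsum_apply: "(sum f S) x = (\<Sum>s\<in>S. f s x)"
  by (induct S rule: infinite_finite_induct) auto

lemma vec_expand: "(x::'i::finite \<Rightarrow> 'k::comm_ring_1) = (\<Sum>i\<in>UNIV. (\<lambda>j. x i * vbasis i j))"
  by (rule ext) (simp add: fsum_apply vbasis_def if_distrib[where f="(*) _"] cong: if_cong)

lemma emb_expand: "emb x = (\<Sum>i\<in>UNIV. sc (x i) * Poly_Mapping.single [i] 1)"
  by (simp add: emb_def sc_single)

lemma lookup_emb: "lookup (emb v) w = fa_emb v w"
  by (auto simp: emb_def lookup_sum lookup_single when_def fa_emb_def split: list.split)

lemma deg_le_emb: "deg_le 1 (emb v)"
  unfolding emb_def by (rule deg_le_sum) (auto intro: deg_le_single)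

lemma klin_add: "klinear f \<Longrightarrow> f (x + y) = f x + f y"
  by (simp add: klinear_def plus_fun_def)
lemma klin_smul: "klinear f \<Longrightarrow> f (\<lambda>i. c * x i) = (\<lambda>j. c * f x j)"
  by (simp add: klinear_def)
lemma klin_zero: "klinear f \<Longrightarrow> f 0 = 0"
  using klin_add[of f 0 0] by simp
lemma klin_uminus: "klinear f \<Longrightarrow> f (- x) = - f x"
  using klin_add[of f x "-x"] klin_zero[of f] by (metis add.commute eq_neg_iff_add_eq_0 add.right_inverse)
lemma klin_diff: "klinear f \<Longrightarrow> f (x - y) = f x - f y"
  using klin_add[of f x "-y"] klin_uminus[of f y] by simp
lemma klin_sum: "klinear f \<Longrightarrow> f (sum g S) = (\<Sum>s\<in>S. f (g s))"
  by (induct S rule: infinite_finite_induct) (auto simp: klin_zero klin_add)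


definition srt :: "'i::countable list \<Rightarrow> bool" where "srt w \<longleftrightarrow> sorted (map to_nat w)"
abbreviation ins :: "'i::countable \<Rightarrow> 'i list \<Rightarrow> 'i list" where "ins i w \<equiv> insort_key to_nat i w"

definition ksrt :: "('i::countable list \<Rightarrow>\<^sub>0 'k::zero) \<Rightarrow> bool" where
  "ksrt P \<longleftrightarrow> (\<forall>v\<in>keys P. srt v)"

lemma ksrt_0[simp]: "ksrt 0" by (simp add: ksrt_def)
lemma ksrt_add: "ksrt P \<Longrightarrow> ksrt Q \<Longrightarrow> ksrt (P + Q)"
  using keys_add[of P Q] by (auto simp: ksrt_def)
lemma ksrt_uminus[simp]: "ksrt (- P) = ksrt (P::'i::countable list \<Rightarrow>\<^sub>0 'k::ab_group_add)"
  by (simp add: ksrt_def keys_def)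
lemma ksrt_diff: "ksrt P \<Longrightarrow> ksrt Q \<Longrightarrow> ksrt (P - (Q::'i::countable list \<Rightarrow>\<^sub>0 'k::ab_group_add))"
  using ksrt_add[of P "-Q"] by simp
lemma ksrt_single: "srt w \<Longrightarrow> ksrt (Poly_Mapping.single w c)"
  by (auto simp: ksrt_def)
lemma ksrt_sc: "ksrt P \<Longrightarrow> ksrt (sc c * P)"
  by (auto simp: ksrt_def in_keys_iff)
lemma ksrt_sum: "(\<And>s. s \<in> S \<Longrightarrow> ksrt (g s)) \<Longrightarrow> ksrt (sum g S)"
  by (induct S rule: infinite_finite_induct) (auto intro: ksrt_add)
lemma ksrt_lext: "(\<And>w. w \<in> keys P \<Longrightarrow> ksrt (f w)) \<Longrightarrow> ksrt (lext f P)"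
  unfolding lext_def by (rule ksrt_sum) (auto intro: ksrt_sc)

lemma srt_Cons: "srt (j # w) \<longleftrightarrow> srt w \<and> (\<forall>x\<in>set w. to_nat j \<le> to_nat x)"
  by (auto simp: srt_def)

lemma srt_ins: "srt w \<Longrightarrow> srt (ins i w)"
  by (simp add: srt_def sorted_insort_key)

lemma length_ins[simp]: "length (ins i w) = Suc (length w)"
  by (simp add: length_insort)

lemma set_ins[simp]: "set (ins i w) = insert i (set w)"
  by (simp add: set_insort_key)

locale pbw =
  fixes br :: "('i::finite \<Rightarrow> 'k::comm_ring_1) \<Rightarrow> ('i \<Rightarrow> 'k) \<Rightarrow> ('i \<Rightarrow> 'k)"
begin

primrec T :: "nat \<Rightarrow> 'i \<Rightarrow> 'i list \<Rightarrow> ('i list \<Rightarrow>\<^sub>0 'k)" where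
  "T 0 i u = Poly_Mapping.single [i] 1"
| "T (Suc n) i u = (if length u \<le> n then T n i u else
     (case u of [] \<Rightarrow> Poly_Mapping.single [i] 1
      | j # w \<Rightarrow> if to_nat i \<le> to_nat j then Poly_Mapping.single (i # u) 1 else
          lext (\<lambda>v. if length v \<le> n then T n j v else Poly_Mapping.single (j # v) 1) (T n i w)
          + (\<Sum>k\<in>UNIV. sc (br (vbasis i) (vbasis j) k) * T n k w)))"

definition f :: "'i \<Rightarrow> 'i list \<Rightarrow> ('i list \<Rightarrow>\<^sub>0 'k)" where
  "f i u = T (length u) i u"

definition act :: "'i \<Rightarrow> ('i list \<Rightarrow>\<^sub>0 'k) \<Rightarrow> ('i list \<Rightarrow>\<^sub>0 'k)" where
  "act i P = lext (f i) P"

definition actv :: "('i \<Rightarrow> 'k) \<Rightarrow> ('i list \<Rightarrow>\<^sub>0 'k) \<Rightarrow> ('i list \<Rightarrow>\<^sub>0 'k)" where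
  "actv x P = (\<Sum>k\<in>UNIV. sc (x k) * act k P)"

lemma T_stable: "length u \<le> n \<Longrightarrow> T n i u = f i u"
proof (induct n arbitrary: i u)
  case 0 then show ?case by (simp add: f_def)
next
  case (Suc n)
  show ?case
  proof (cases "length u \<le> n")
    case True then show ?thesis using Suc by simp
  next
    case False then have "length u = Suc n" using Suc by simp
    then show ?thesis by (simp add: f_def)
  qed
qed

lemma f_head: "v = [] \<or> to_nat j \<le> to_nat (hd v) \<Longrightarrow> f j v = Poly_Mapping.single (j # v) 1"
  by (cases v) (auto simp: f_def)

lemma act_single: "act i (Poly_Mapping.single w c) = sc c * f i w"
  by (simp add: act_def)

lemma act_add: "act i (P + Q) = act i P + act i Q" by (simp add: act_def lext_add)
lemma act_sc: "act i (sc c * P) = sc c * act i P" by (simp add: act_def lext_sc)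
lemma act_diff: "act i (P - Q) = act i P - act i Q" by (simp add: act_def lext_diff)
lemma act_zero[simp]: "act i 0 = 0" by (simp add: act_def)

lemma actv_add: "actv x (P + Q) = actv x P + actv x Q"
  by (simp add: actv_def act_add distrib_left sum.distrib)
lemma actv_sc: "actv x (sc c * P) = sc c * actv x P"
  by (simp add: actv_def act_sc sum_distrib_left mult.assoc[symmetric] sc_mult mult.commute)
lemma actv_diff: "actv x (P - Q) = actv x P - actv x Q"
  by (simp add: actv_def act_diff right_diff_distrib sum_subtractf)
lemma actv_zero[simp]: "actv x 0 = 0" by (simp add: actv_def)
lemma actv_vadd: "actv (x + y) P = actv x P + actv y P"
  by (simp add: actv_def sc_add distrib_right sum.distrib)
lemma actv_vsmul: "actv (\<lambda>i. c * x i) P = sc c * actv x P"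
  by (simp add: actv_def sum_distrib_left sc_mult[symmetric] mult.assoc)
lemma actv_vzero[simp]: "actv 0 P = 0"
  by (simp add: actv_def)
lemma actv_vuminus: "actv (- x) P = - actv x P"
  using actv_vadd[of x "-x" P] by (metis add.commute eq_neg_iff_add_eq_0 add.right_inverse actv_vzero)
lemma actv_vdiff: "actv (x - y) P = actv x P - actv y P"
  using actv_vadd[of x "-y" P] by (simp add: actv_vuminus)
lemma actv_vbasis: "actv (vbasis i) P = act i P"
proof -
  have "actv (vbasis i) P = (\<Sum>k\<in>UNIV. if k = i then act i P else 0)"
    unfolding actv_def vbasis_def by (rule sum.cong) auto
  then show ?thesis by simp
qed
lemma actv_sum_left: "actv (sum g S) P = (\<Sum>s\<in>S. actv (g s) P)"
proof (induct S rule: infinite_finite_induct)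
  case (infinite A) then show ?case by (metis sum.infinite actv_vzero)
next
  case empty then show ?case by (simp only: sum.empty actv_vzero)
next
  case (insert x F) then show ?case by (simp add: sum.insert[OF insert(1,2)] actv_vadd del: plus_fun_apply)
qed

definition good :: "'i \<Rightarrow> 'i list \<Rightarrow> bool" where
  "good i u \<longleftrightarrow> ksrt (f i u) \<and> deg_le (length u) (f i u - Poly_Mapping.single (ins i u) 1)"

lemma good_deg: "good i u \<Longrightarrow> deg_le (Suc (length u)) (f i u)"
proof -
  assume g: "good i u"
  have "f i u = (f i u - Poly_Mapping.single (ins i u) 1) + Poly_Mapping.single (ins i u) 1" by simp
  moreover have "deg_le (Suc (length u)) (f i u - Poly_Mapping.single (ins i u) 1)"
    using g by (auto simp: good_def intro: deg_le_mono[where m="length u"])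
  moreover have "deg_le (Suc (length u)) (Poly_Mapping.single (ins i u) (1::'k))"
    by (rule deg_le_single) simp
  ultimately show ?thesis by (metis deg_le_add)
qed

lemma good_top: "good i u \<Longrightarrow> v \<in> keys (f i u) \<Longrightarrow> length v = Suc (length u) \<Longrightarrow> v = ins i u"
proof (rule ccontr)
  assume g: "good i u" and v: "v \<in> keys (f i u)" "length v = Suc (length u)" "v \<noteq> ins i u"
  then have "v \<in> keys (f i u - Poly_Mapping.single (ins i u) 1)"
    by (auto simp: in_keys_iff lookup_minus lookup_single when_def)
  then show False using g v by (auto simp: good_def deg_le_def)
qed

lemma f_cons:
  assumes "srt (j # w)" "to_nat j < to_nat i" "good i w"
  shows "f i (j # w) = act j (f i w) + actv (br (vbasis i) (vbasis j)) (Poly_Mapping.single w 1)"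
proof -
  let ?n = "length w"
  have "f i (j # w) = lext (\<lambda>v. if length v \<le> ?n then T ?n j v else Poly_Mapping.single (j # v) 1) (T ?n i w)
          + (\<Sum>k\<in>UNIV. sc (br (vbasis i) (vbasis j) k) * T ?n k w)"
    using assms(2) by (simp add: f_def)
  also have "T ?n i w = f i w" by (simp add: T_stable)
  also have "(\<Sum>k\<in>UNIV. sc (br (vbasis i) (vbasis j) k) * T ?n k w) = actv (br (vbasis i) (vbasis j)) (Poly_Mapping.single w 1)"
    by (simp add: actv_def act_single T_stable)
  also have "lext (\<lambda>v. if length v \<le> ?n then T ?n j v else Poly_Mapping.single (j # v) 1) (f i w) = act j (f i w)"
    unfolding act_def
  proof (rule lext_cong)
    fix v assume v: "v \<in> keys (f i w)"
    show "(if length v \<le> ?n then T ?n j v else Poly_Mapping.single (j # v) 1) = f j v"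
    proof (cases "length v \<le> ?n")
      case True then show ?thesis by (simp add: T_stable)
    next
      case False
      have "deg_le (Suc ?n) (f i w)" using assms(3) by (rule good_deg)
      then have "length v = Suc ?n" using v False by (auto simp: deg_le_def)
      then have "v = ins i w" using good_top assms(3) v by blast
      moreover have "to_nat j \<le> to_nat (hd (ins i w))"
        using assms(1,2) by (cases w) (auto simp: srt_Cons)
      ultimately show ?thesis using False f_head by simp
    qed
  qed
  finally show ?thesis .
qed

lemma good_all: "srt u \<Longrightarrow> good i u"
proof (induct "length u" arbitrary: i u rule: less_induct)
  case less
  show ?case
  proof (cases u)
    case Nil then show ?thesis by (simp add: good_def f_def ksrt_single srt_def)
  next
    case (Cons j w)
    show ?thesis
    proof (cases "to_nat i \<le> to_nat j")
      case True
      then have "f i u = Poly_Mapping.single (ins i u) 1" using Cons by (simp add: f_head)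
      moreover have "srt (ins i u)" using less.prems by (rule srt_ins)
      ultimately show ?thesis by (simp add: good_def ksrt_single)
    next
      case False
      then have lt: "to_nat j < to_nat i" by simp
      have sw: "srt w" using less.prems Cons by (simp add: srt_Cons)
      have gw: "good i w" using less Cons sw by simp
      have fu: "f i u = act j (f i w) + actv (br (vbasis i) (vbasis j)) (Poly_Mapping.single w 1)"
        using f_cons[OF _ lt gw] less.prems Cons by simp
      define low where "low = f i w - Poly_Mapping.single (ins i w) 1"
      have low_deg: "deg_le (length w) low" using gw by (simp add: good_def low_def)
      have low_srt: "ksrt low" using gw srt_ins[OF sw] by (auto simp: good_def low_def intro!: ksrt_diff ksrt_single)
      have hd: "to_nat j \<le> to_nat (hd (ins i w))"
        using less.prems Cons lt by (cases w) (auto simp: srt_Cons)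
      have insu: "ins i u = j # ins i w" using Cons lt by simp
      have "act j (f i w) = act j (Poly_Mapping.single (ins i w) 1) + act j low"
        by (simp add: low_def act_add[symmetric])
      also have "act j (Poly_Mapping.single (ins i w) 1) = Poly_Mapping.single (ins i u) 1"
        using hd insu by (simp add: act_single f_head)
      finally have fu2: "f i u - Poly_Mapping.single (ins i u) 1 = act j low + actv (br (vbasis i) (vbasis j)) (Poly_Mapping.single w 1)"
        using fu by simp
      have A: "deg_le (length u) (act j low) \<and> ksrt (act j low)"
      proof -
        have gv: "\<And>v. v \<in> keys low \<Longrightarrow> good j v \<and> length v \<le> length w"
          using low_deg low_srt less Cons by (auto simp: deg_le_def ksrt_def)
        have "\<And>v. v \<in> keys low \<Longrightarrow> deg_le (length u) (f j v)"
        proof -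
          fix v assume v: "v \<in> keys low"
          then have "deg_le (Suc (length v)) (f j v)" using gv good_deg by blast
          then show "deg_le (length u) (f j v)" using gv[OF v] Cons by (auto intro: deg_le_mono)
        qed
        moreover have "\<And>v. v \<in> keys low \<Longrightarrow> ksrt (f j v)" using gv by (simp add: good_def)
        ultimately show ?thesis unfolding act_def
          by (auto intro!: deg_le_lext ksrt_lext)
      qed
      have B: "deg_le (length u) (actv (br (vbasis i) (vbasis j)) (Poly_Mapping.single w 1)) \<and>
               ksrt (actv (br (vbasis i) (vbasis j)) (Poly_Mapping.single w 1))"
      proof -
        have "\<And>k. good k w" using less Cons sw by simp
        then have "\<And>k. deg_le (length u) (f k w) \<and> ksrt (f k w)" using Cons good_deg
          by (auto simp: good_def)
        then show ?thesis unfolding actv_def act_single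
          by (auto intro!: deg_le_sum ksrt_sum deg_le_sc ksrt_sc)
      qed
      have "deg_le (length u) (f i u - Poly_Mapping.single (ins i u) 1)"
        using fu2 A B by (simp add: deg_le_add)
      moreover have "ksrt (f i u)"
      proof -
        have "f i u = Poly_Mapping.single (ins i u) 1 + (act j low + actv (br (vbasis i) (vbasis j)) (Poly_Mapping.single w 1))"
          using fu2 by (simp add: algebra_simps)
        moreover have "srt (ins i u)" using less.prems by (rule srt_ins)
        ultimately show ?thesis using A B by (simp add: ksrt_add ksrt_single)
      qed
      ultimately show ?thesis by (simp add: good_def)
    qed
  qed
qed

end


lemma lb_lin1: "lie_bracket br \<Longrightarrow> klinear (br x)" by (simp add: lie_bracket_def)
lemma lb_lin2: "lie_bracket br \<Longrightarrow> klinear (\<lambda>x. br x y)" by (simp add: lie_bracket_def)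
lemma lb_alt: "lie_bracket br \<Longrightarrow> br x x = 0" by (simp add: lie_bracket_def zero_fun_def)
lemma lb_anti: "lie_bracket br \<Longrightarrow> br y x = - br x y"
proof -
  assume lb: "lie_bracket br"
  have "br (x+y) (x+y) = br x x + br x y + (br y x + br y y)"
    using klin_add[OF lb_lin1[OF lb]] klin_add[OF lb_lin2[OF lb]] by (simp add: klin_add[OF lb_lin2[OF lb], of x y])
  then have "0 = br x y + br y x" using lb_alt[OF lb] by simp
  then show ?thesis by (metis add.commute eq_neg_iff_add_eq_0)
qed
lemma lb_jacobi: "lie_bracket br \<Longrightarrow> br x (br y z) + br y (br z x) + br z (br x y) = 0"
  by (simp add: lie_bracket_def fun_eq_iff plus_fun_def zero_fun_def)

locale pbwL = pbw br for br :: "('i::finite \<Rightarrow> 'k::comm_ring_1) \<Rightarrow> ('i \<Rightarrow> 'k) \<Rightarrow> ('i \<Rightarrow> 'k)" +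
  assumes lb: "lie_bracket br"
begin

abbreviation e where "e \<equiv> vbasis"

definition comm_ok :: "('i \<Rightarrow> 'k) \<Rightarrow> ('i \<Rightarrow> 'k) \<Rightarrow> ('i list \<Rightarrow>\<^sub>0 'k) \<Rightarrow> bool" where
  "comm_ok x y P \<longleftrightarrow> actv x (actv y P) - actv y (actv x P) = actv (br x y) P"

lemma comm_ok_add: "comm_ok x y P \<Longrightarrow> comm_ok x y Q \<Longrightarrow> comm_ok x y (P + Q)"
  by (simp add: comm_ok_def actv_add algebra_simps)
lemma comm_ok_sc: "comm_ok x y P \<Longrightarrow> comm_ok x y (sc c * P)"
  by (simp add: comm_ok_def actv_sc right_diff_distrib[symmetric])
lemma comm_ok_zero: "comm_ok x y 0" by (simp add: comm_ok_def)
lemma comm_ok_sum: "(\<And>s. s \<in> S \<Longrightarrow> comm_ok x y (g s)) \<Longrightarrow> comm_ok x y (sum g S)"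
  by (induct S rule: infinite_finite_induct) (auto intro: comm_ok_add comm_ok_zero)
lemma comm_ok_lext: "(\<And>w. w \<in> keys P \<Longrightarrow> comm_ok x y (g w)) \<Longrightarrow> comm_ok x y (lext g P)"
  unfolding lext_def by (rule comm_ok_sum) (auto intro: comm_ok_sc)
lemma comm_ok_swap: "comm_ok x y P \<Longrightarrow> comm_ok y x P"
  unfolding comm_ok_def by (simp add: lb_anti[OF lb, of x y] actv_vuminus) (metis minus_diff_eq minus_minus)
lemma comm_ok_same: "comm_ok x x P"
  by (simp add: comm_ok_def lb_alt[OF lb] zero_fun_def[symmetric])

lemma comm_ok_vec:
  assumes "\<And>i j. comm_ok (e i) (e j) P"
  shows "comm_ok x y P"
proof -
  have bx: "x = (\<Sum>i\<in>UNIV. (\<lambda>t. x i * e i t))" by (rule vec_expand)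
  have by': "y = (\<Sum>j\<in>UNIV. (\<lambda>t. y j * e j t))" by (rule vec_expand)
  have brxy: "br x y = (\<Sum>i\<in>UNIV. \<Sum>j\<in>UNIV. (\<lambda>t. x i * (y j * br (e i) (e j) t)))"
  proof -
    have "br x y = (\<Sum>i\<in>UNIV. br (\<lambda>t. x i * e i t) y)"
      by (subst bx) (simp add: klin_sum[OF lb_lin2[OF lb]])
    also have "\<dots> = (\<Sum>i\<in>UNIV. \<Sum>j\<in>UNIV. (\<lambda>t. x i * (y j * br (e i) (e j) t)))"
      apply (rule sum.cong, simp)
      apply (subst by')
      apply (simp add: klin_smul[OF lb_lin2[OF lb]] klin_sum[OF lb_lin1[OF lb]] klin_smul[OF lb_lin1[OF lb]] fun_eq_iff fsum_apply sum_distrib_left)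
      done
    finally show ?thesis .
  qed
  have ax: "\<And>Q. actv x Q = (\<Sum>i\<in>UNIV. sc (x i) * actv (e i) Q)"
    by (subst bx) (simp add: actv_sum_left actv_vsmul)
  have ay: "\<And>Q. actv y Q = (\<Sum>j\<in>UNIV. sc (y j) * actv (e j) Q)"
    by (subst by') (simp add: actv_sum_left actv_vsmul)
  have sumlin0: "\<And>(g::'i \<Rightarrow> _) c S. actv c (sum g S) = (\<Sum>i\<in>S. actv c (g i))"
    subgoal for g c S by (induct S rule: infinite_finite_induct) (auto simp: actv_add)
    done
  have sumlin: "\<And>(g::'i \<Rightarrow> _) c. actv c (sum g UNIV) = (\<Sum>i\<in>UNIV. actv c (g i))"
    by (rule sumlin0)
  have L1: "actv x (actv y P) = (\<Sum>i\<in>UNIV. \<Sum>j\<in>UNIV. sc (x i) * sc (y j) * actv (e i) (actv (e j) P))"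
    apply (simp add: ax ay sumlin actv_sc sum_distrib_left mult.assoc)
    apply (rule trans[OF sum.swap])
    apply (rule sum.cong, simp)+
    apply (simp add: sc_assoc mult.commute)
    done
  have L2: "actv y (actv x P) = (\<Sum>i\<in>UNIV. \<Sum>j\<in>UNIV. sc (x i) * sc (y j) * actv (e j) (actv (e i) P))"
    apply (simp add: ax ay sumlin actv_sc sum_distrib_left mult.assoc)
    done
  have "actv x (actv y P) - actv y (actv x P) =
    (\<Sum>i\<in>UNIV. \<Sum>j\<in>UNIV. sc (x i) * sc (y j) * (actv (e i) (actv (e j) P) - actv (e j) (actv (e i) P)))"
    by (simp add: L1 L2 sum_subtractf[symmetric] right_diff_distrib)
  also have "\<dots> = (\<Sum>i\<in>UNIV. \<Sum>j\<in>UNIV. sc (x i) * sc (y j) * actv (br (e i) (e j)) P)"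
    using assms by (simp add: comm_ok_def)
  also have "\<dots> = actv (br x y) P"
    by (simp add: brxy actv_sum_left actv_vsmul mult.assoc)
  finally show ?thesis by (simp add: comm_ok_def)
qed

lemma act_eq: "act i P = actv (e i) P" by (simp add: actv_vbasis)

lemma C1:
  assumes "to_nat j < to_nat i" "srt N" "N = [] \<or> to_nat j \<le> to_nat (hd N)"
  shows "comm_ok (e i) (e j) (Poly_Mapping.single N 1)"
proof -
  have sjN: "srt (j # N)" using assms by (cases N) (auto simp: srt_Cons srt_def)
  have "act j (Poly_Mapping.single N 1) = Poly_Mapping.single (j # N) 1"
    using assms(3) by (simp add: act_single f_head)
  moreover have "act i (Poly_Mapping.single (j # N) 1) = act j (f i N) + actv (br (e i) (e j)) (Poly_Mapping.single N 1)"
    using f_cons[OF sjN assms(1) good_all[OF assms(2)]] by (simp add: act_single)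
  moreover have "act i (Poly_Mapping.single N 1) = f i N" by (simp add: act_single)
  ultimately show ?thesis by (simp add: comm_ok_def act_eq[symmetric])
qed

definition Qn :: "nat \<Rightarrow> bool" where
  "Qn n \<longleftrightarrow> (\<forall>x y P. ksrt P \<longrightarrow> deg_le n P \<longrightarrow> comm_ok x y P)"

lemma Qn_I:
  assumes "\<And>i j N. srt N \<Longrightarrow> length N \<le> n \<Longrightarrow> comm_ok (e i) (e j) (Poly_Mapping.single N 1)"
  shows "Qn n"
  unfolding Qn_def
proof (intro allI impI)
  fix x y P assume P: "ksrt (P::'i list \<Rightarrow>\<^sub>0 'k)" "deg_le n P"
  show "comm_ok x y P"
  proof (rule comm_ok_vec)
    fix i j
    have "comm_ok (e i) (e j) (lext (\<lambda>w. Poly_Mapping.single w 1) P)"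
      using P assms by (auto intro!: comm_ok_lext simp: ksrt_def deg_le_def)
    then show "comm_ok (e i) (e j) P" by (simp add: lext_id)
  qed
qed

lemma main_case:
  assumes Q: "Qn (length M)" and lt: "to_nat k < to_nat j" "to_nat j < to_nat i" and sN: "srt (k # M)"
  shows "comm_ok (e i) (e j) (Poly_Mapping.single (k # M) 1)"
proof -
  let ?zM = "Poly_Mapping.single M (1::'k)" and ?zN = "Poly_Mapping.single (k # M) (1::'k)"
  have sM: "srt M" using sN by (simp add: srt_Cons)
  have hdM: "M = [] \<or> to_nat k \<le> to_nat (hd M)" using sN by (cases M) (auto simp: srt_Cons)
  have QzM: "\<And>x y. comm_ok x y ?zM" using Q sM by (auto simp: Qn_def ksrt_single deg_le_single)
  have akM: "actv (e k) ?zM = ?zN" using hdM by (simp add: act_eq[symmetric] act_single f_head)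
  have step: "actv (e a) (actv (e b) ?zN) = actv (e k) (actv (e a) (actv (e b) ?zM))
      + actv (br (e a) (e k)) (actv (e b) ?zM) + actv (e a) (actv (br (e b) (e k)) ?zM)"
    if ab: "to_nat k < to_nat a" "to_nat k < to_nat b" for a b
  proof -
    have c1: "comm_ok (e b) (e k) ?zM" using C1[OF ab(2) sM hdM] .
    have "actv (e b) ?zN = actv (e k) (actv (e b) ?zM) + actv (br (e b) (e k)) ?zM"
      using c1 akM by (simp add: comm_ok_def algebra_simps)
    then have A: "actv (e a) (actv (e b) ?zN) = actv (e a) (actv (e k) (actv (e b) ?zM)) + actv (e a) (actv (br (e b) (e k)) ?zM)"
      by (simp add: actv_add)
    define Y where "Y = actv (e b) ?zM"
    have Yf: "Y = f b M" by (simp add: Y_def act_eq[symmetric] act_single)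
    have gb: "good b M" using good_all[OF sM] .
    define wj where "wj = Y - Poly_Mapping.single (ins b M) 1"
    have wj: "ksrt wj" "deg_le (length M) wj"
      using gb srt_ins[OF sM] by (auto simp: wj_def Yf good_def intro!: ksrt_diff ksrt_single)
    have hd2: "to_nat k \<le> to_nat (hd (ins b M))"
      using sN ab by (cases M) (auto simp: srt_Cons)
    have "comm_ok (e a) (e k) (Poly_Mapping.single (ins b M) 1)"
      using C1[OF ab(1) srt_ins[OF sM]] hd2 by simp
    moreover have "comm_ok (e a) (e k) wj" using Q wj by (simp add: Qn_def)
    ultimately have "comm_ok (e a) (e k) (Poly_Mapping.single (ins b M) 1 + wj)" by (rule comm_ok_add)
    then have "comm_ok (e a) (e k) Y" by (simp add: wj_def)
    then have "actv (e a) (actv (e k) Y) = actv (e k) (actv (e a) Y) + actv (br (e a) (e k)) Y"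
      by (simp add: comm_ok_def algebra_simps)
    with A show ?thesis by (simp add: Y_def)
  qed
  have si: "actv (e i) (actv (e j) ?zN) = actv (e k) (actv (e i) (actv (e j) ?zM))
      + actv (br (e i) (e k)) (actv (e j) ?zM) + actv (e i) (actv (br (e j) (e k)) ?zM)"
    using step lt by simp
  have sj: "actv (e j) (actv (e i) ?zN) = actv (e k) (actv (e j) (actv (e i) ?zM))
      + actv (br (e j) (e k)) (actv (e i) ?zM) + actv (e j) (actv (br (e i) (e k)) ?zM)"
    using step lt by simp
  have q1: "actv (e i) (actv (e j) ?zM) - actv (e j) (actv (e i) ?zM) = actv (br (e i) (e j)) ?zM"
    using QzM by (simp add: comm_ok_def)
  have q2: "actv (br (e i) (e k)) (actv (e j) ?zM) - actv (e j) (actv (br (e i) (e k)) ?zM) = actv (br (br (e i) (e k)) (e j)) ?zM"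
    using QzM by (simp add: comm_ok_def)
  have q3: "actv (e i) (actv (br (e j) (e k)) ?zM) - actv (br (e j) (e k)) (actv (e i) ?zM) = actv (br (e i) (br (e j) (e k))) ?zM"
    using QzM by (simp add: comm_ok_def)
  have q4: "actv (e k) (actv (br (e i) (e j)) ?zM) - actv (br (e i) (e j)) (actv (e k) ?zM) = actv (br (e k) (br (e i) (e j))) ?zM"
    using QzM by (simp add: comm_ok_def)
  have jac: "br (e k) (br (e i) (e j)) + br (br (e i) (e k)) (e j) + br (e i) (br (e j) (e k)) = 0"
    using lb_jacobi[OF lb, of "e k" "e i" "e j"] lb_anti[OF lb, of "br (e i) (e k)" "e j"]
      lb_anti[OF lb, of "e i" "e k"] klin_uminus[OF lb_lin1[OF lb]] by (simp add: algebra_simps)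
  have "actv (e i) (actv (e j) ?zN) - actv (e j) (actv (e i) ?zN)
     = actv (e k) (actv (e i) (actv (e j) ?zM) - actv (e j) (actv (e i) ?zM))
       + (actv (br (e i) (e k)) (actv (e j) ?zM) - actv (e j) (actv (br (e i) (e k)) ?zM))
       + (actv (e i) (actv (br (e j) (e k)) ?zM) - actv (br (e j) (e k)) (actv (e i) ?zM))"
    using si sj by (simp add: actv_diff algebra_simps)
  also have "\<dots> = actv (e k) (actv (br (e i) (e j)) ?zM) + actv (br (br (e i) (e k)) (e j)) ?zM
       + actv (br (e i) (br (e j) (e k))) ?zM" using q1 q2 q3 by simp
  also have "\<dots> = actv (br (e i) (e j)) ?zN + (actv (br (e k) (br (e i) (e j))) ?zM
       + actv (br (br (e i) (e k)) (e j)) ?zM + actv (br (e i) (br (e j) (e k))) ?zM)"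
    using q4 akM by (simp add: algebra_simps)
  also have "\<dots> = actv (br (e i) (e j)) ?zN"
    using jac by (simp add: actv_vadd[symmetric])
  finally show ?thesis by (simp add: comm_ok_def)
qed

lemma all_comm: "srt N \<Longrightarrow> comm_ok x y (Poly_Mapping.single N 1)"
proof (induct "length N" arbitrary: N x y rule: less_induct)
  case less
  have Qlow: "\<And>m. m < length N \<Longrightarrow> Qn m"
    by (rule Qn_I) (use less in auto)
  show ?case
  proof (rule comm_ok_vec)
    fix i j
    have ord: "comm_ok (e a) (e b) (Poly_Mapping.single N 1)" if ab: "to_nat b < to_nat a" for a b
    proof (cases "N = [] \<or> to_nat b \<le> to_nat (hd N)")
      case True then show ?thesis using C1[OF ab less.prems] by simp
    next
      case False
      then obtain k M where N: "N = k # M" and kb: "to_nat k < to_nat b" by (cases N) auto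
      have "Qn (length M)" using Qlow N by simp
      then show ?thesis using main_case[OF _ kb ab] less.prems N by simp
    qed
    show "comm_ok (e i) (e j) (Poly_Mapping.single N 1)"
    proof (cases "to_nat j < to_nat i")
      case True then show ?thesis using ord by simp
    next
      case False
      show ?thesis
      proof (cases "i = j")
        case True then show ?thesis by (simp add: comm_ok_same)
      next
        case False
        then have "to_nat i < to_nat j" using \<open>\<not> to_nat j < to_nat i\<close> by (metis linorder_neqE_nat to_nat_split)
        then show ?thesis using ord comm_ok_swap by blast
      qed
    qed
  qed
qed

lemma all_Qn: "Qn n"
  by (rule Qn_I) (rule all_comm)

end


definition rels :: "(('i::finite \<Rightarrow> 'k::comm_ring_1) \<Rightarrow> ('i \<Rightarrow> 'k) \<Rightarrow> ('i \<Rightarrow> 'k)) \<Rightarrow> ('i list \<Rightarrow>\<^sub>0 'k) set" where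
  "rels br = {emb x * emb y - emb y * emb x - emb (br x y) | x y. True}"

lemma deg_le_ex: "\<exists>n. deg_le n P"
  by (rule exI[of _ "Max (length ` keys P)"]) (auto simp: deg_le_def)

context pbwL
begin

fun actword :: "'i list \<Rightarrow> ('i list \<Rightarrow>\<^sub>0 'k) \<Rightarrow> ('i list \<Rightarrow>\<^sub>0 'k)" where
  "actword [] Q = Q"
| "actword (i # w) Q = act i (actword w Q)"

lemma actword_add: "actword w (P + Q) = actword w P + actword w Q"
  by (induct w) (auto simp: act_add)
lemma actword_sc: "actword w (sc c * P) = sc c * actword w P"
  by (induct w) (auto simp: act_sc)
lemma actword_zero[simp]: "actword w 0 = 0"
  by (induct w) auto
lemma actword_append: "actword (u @ v) Q = actword u (actword v Q)"
  by (induct u) auto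
lemma actword_lext: "actword w (lext g P) = lext (\<lambda>v. actword w (g v)) P"
  by (rule lin_eqI[where P=P]) (auto simp: lext_add actword_add actword_sc)

definition rho :: "('i list \<Rightarrow>\<^sub>0 'k) \<Rightarrow> ('i list \<Rightarrow>\<^sub>0 'k) \<Rightarrow> ('i list \<Rightarrow>\<^sub>0 'k)" where
  "rho P Q = lext (\<lambda>w. actword w Q) P"

lemma rho_add1: "rho (P1 + P2) Q = rho P1 Q + rho P2 Q" by (simp add: rho_def lext_add)
lemma rho_diff1: "rho (P1 - P2) Q = rho P1 Q - rho P2 Q" by (simp add: rho_def lext_diff)
lemma rho_single: "rho (Poly_Mapping.single w c) Q = sc c * actword w Q" by (simp add: rho_def)
lemma rho_add2: "rho P (Q1 + Q2) = rho P Q1 + rho P Q2"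
  by (rule lin_eqI[where P=P]) (auto simp: rho_add1 rho_single actword_add distrib_left)
lemma rho_sc2: "rho P (sc c * Q) = sc c * rho P Q"
  by (rule lin_eqI[where P=P]) (auto simp: rho_add1 rho_single actword_sc distrib_left sc_assoc mult.commute)
lemma rho_zero2[simp]: "rho P 0 = 0"
  using rho_add2[of P 0 0] by simp

lemma rho_mult: "rho (P1 * P2) Q = rho P1 (rho P2 Q)"
proof (rule lin_eqI[where P=P1])
  fix w c
  show "rho (Poly_Mapping.single w c * P2) Q = rho (Poly_Mapping.single w c) (rho P2 Q)"
  proof (rule lin_eqI[where P=P2])
    fix v d
    show "rho (Poly_Mapping.single w c * Poly_Mapping.single v d) Q =
          rho (Poly_Mapping.single w c) (rho (Poly_Mapping.single v d) Q)"
      by (simp add: single_mult_single rho_single actword_append actword_sc sc_assoc sc_mult)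
  qed (auto simp: distrib_left rho_add1 rho_add2)
qed (auto simp: distrib_right rho_add1)

lemma rho_emb: "rho (emb x) Q = actv x Q"
  by (simp add: emb_def rho_def lext_sum actv_def act_def[symmetric])

lemma ksrt_act: "ksrt Q \<Longrightarrow> ksrt (act i Q)"
  unfolding act_def by (rule ksrt_lext) (use good_all in \<open>auto simp: good_def ksrt_def\<close>)
lemma ksrt_actword: "ksrt Q \<Longrightarrow> ksrt (actword w Q)"
  by (induct w) (auto intro: ksrt_act)
lemma ksrt_rho: "ksrt Q \<Longrightarrow> ksrt (rho P Q)"
  unfolding rho_def by (rule ksrt_lext) (auto intro: ksrt_actword)

lemma comm_ok_all: "ksrt Q \<Longrightarrow> comm_ok x y Q"
  using all_Qn deg_le_ex[of Q] by (auto simp: Qn_def)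

lemma rho_rel: "r \<in> rels br \<Longrightarrow> ksrt Q \<Longrightarrow> rho r Q = 0"
proof -
  assume r: "r \<in> rels br" and Q: "ksrt Q"
  then obtain x y where "r = emb x * emb y - emb y * emb x - emb (br x y)" by (auto simp: rels_def)
  then show ?thesis using comm_ok_all[OF Q, of x y]
    by (simp add: rho_diff1 rho_mult rho_emb comm_ok_def)
qed

lemma rho_ideal: "P \<in> tid (rels br) \<Longrightarrow> rho P (Poly_Mapping.single [] 1) = 0"
proof (induct rule: tid.induct)
  case tid0 then show ?case by (simp add: rho_def)
next
  case (tidg g a b)
  have "ksrt (rho b (Poly_Mapping.single [] 1))" by (rule ksrt_rho) (simp add: ksrt_single srt_def)
  then show ?case using tidg by (simp add: rho_mult rho_rel)
next
  case (tidadd p q) then show ?case by (simp add: rho_add1)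
qed

lemma actword_srt: "srt w \<Longrightarrow> actword w (Poly_Mapping.single [] 1) = Poly_Mapping.single w 1"
proof (induct w)
  case Nil then show ?case by simp
next
  case (Cons i w)
  then have "srt w" "w = [] \<or> to_nat i \<le> to_nat (hd w)" by (cases w, auto simp: srt_Cons)+
  then show ?case using Cons by (simp add: act_single f_head)
qed

lemma rho_srt: "ksrt P \<Longrightarrow> rho P (Poly_Mapping.single [] 1) = P"
proof -
  assume "ksrt P"
  then have "rho P (Poly_Mapping.single [] 1) = lext (\<lambda>w. Poly_Mapping.single w 1) P"
    unfolding rho_def by (intro lext_cong) (auto simp: actword_srt ksrt_def)
  then show ?thesis by (simp add: lext_id)
qed

theorem pbw_indep: "P \<in> tid (rels br) \<Longrightarrow> ksrt P \<Longrightarrow> P = 0"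
  using rho_ideal rho_srt by metis

end

section \<open>Spanning\<close>

definition red :: "nat \<Rightarrow> ('i::countable list \<Rightarrow>\<^sub>0 'k::comm_ring_1) set \<Rightarrow> ('i list \<Rightarrow>\<^sub>0 'k) \<Rightarrow> bool" where
  "red n G P \<longleftrightarrow> (\<exists>s. ksrt s \<and> deg_le n s \<and> P - s \<in> tid G)"

lemma red_self: "ksrt P \<Longrightarrow> deg_le n P \<Longrightarrow> red n G P"
  unfolding red_def by (rule exI[of _ P]) (simp add: tid0)
lemma red_add: "red n G P \<Longrightarrow> red n G Q \<Longrightarrow> red n G (P + Q)"
  unfolding red_def
proof (elim exE conjE)
  fix s t assume "ksrt s" "deg_le n s" "P - s \<in> tid G" "ksrt t" "deg_le n t" "Q - t \<in> tid G"
  then show "\<exists>u. ksrt u \<and> deg_le n u \<and> P + Q - u \<in> tid G"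
    by (intro exI[of _ "s + t"]) (auto intro: ksrt_add deg_le_add dest: tidadd simp: algebra_simps)
qed
lemma red_sc: "red n G P \<Longrightarrow> red n G (sc c * P)"
  unfolding red_def
proof (elim exE conjE)
  fix s assume "ksrt s" "deg_le n s" "P - s \<in> tid G"
  then show "\<exists>u. ksrt u \<and> deg_le n u \<and> sc c * P - u \<in> tid G"
    by (intro exI[of _ "sc c * s"]) (auto intro: ksrt_sc deg_le_sc dest: tid_lmult[where c="sc c"] simp: right_diff_distrib)
qed
lemma red_zero: "red n G 0" by (rule red_self) auto
lemma red_sum: "(\<And>s. s \<in> S \<Longrightarrow> red n G (g s)) \<Longrightarrow> red n G (sum g S)"
  by (induct S rule: infinite_finite_induct) (auto intro: red_add red_zero)
lemma red_lext: "(\<And>w. w \<in> keys P \<Longrightarrow> red n G (g w)) \<Longrightarrow> red n G (lext g P)"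
  unfolding lext_def by (rule red_sum) (auto intro: red_sc)
lemma red_ideal: "P - Q \<in> tid G \<Longrightarrow> red n G Q \<Longrightarrow> red n G P"
  unfolding red_def
proof (elim exE conjE)
  fix s assume "P - Q \<in> tid G" "ksrt s" "deg_le n s" "Q - s \<in> tid G"
  then show "\<exists>u. ksrt u \<and> deg_le n u \<and> P - u \<in> tid G"
    by (intro exI[of _ s]) (auto dest: tidadd)
qed
lemma red_mono: "red m G P \<Longrightarrow> m \<le> n \<Longrightarrow> red n G P"
  unfolding red_def by (auto intro: deg_le_mono)

definition modI :: "nat \<Rightarrow> ('i list \<Rightarrow>\<^sub>0 'k::comm_ring_1) set \<Rightarrow> ('i list \<Rightarrow>\<^sub>0 'k) \<Rightarrow> bool" where
  "modI n G P \<longleftrightarrow> (\<exists>r. deg_le n r \<and> P - r \<in> tid G)"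

lemma X_single: "Poly_Mapping.single [i] 1 * Poly_Mapping.single v 1 = Poly_Mapping.single (i # v) (1::'k::comm_ring_1)"
  by (simp add: single_mult_single)

lemma emb_single_deg: "deg_le (Suc (length v)) (emb x * Poly_Mapping.single v 1)"
  using deg_le_mult[OF deg_le_emb deg_le_single[of v "length v"]] by simp

lemma insert_step:
  fixes br :: "('i::finite \<Rightarrow> 'k::comm_ring_1) \<Rightarrow> ('i \<Rightarrow> 'k) \<Rightarrow> ('i \<Rightarrow> 'k)"
  shows "srt v \<Longrightarrow> modI (length v) (rels br) (Poly_Mapping.single (i # v) 1 - Poly_Mapping.single (ins i v) 1)"
proof (induct v)
  case Nil then show ?case by (auto simp: modI_def intro!: exI[of _ 0] tid0)
next
  case (Cons j v)
  show ?case
  proof (cases "to_nat i \<le> to_nat j")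
    case True then show ?thesis by (auto simp: modI_def intro!: exI[of _ 0] tid0)
  next
    case False
    have sv: "srt v" using Cons by (simp add: srt_Cons)
    then obtain r where r: "deg_le (length v) r" "Poly_Mapping.single (i # v) 1 - Poly_Mapping.single (ins i v) 1 - r \<in> tid (rels br)"
      using Cons by (auto simp: modI_def)
    let ?X = "\<lambda>a. Poly_Mapping.single [a] (1::'k)"
    let ?z = "Poly_Mapping.single v (1::'k)"
    define g where "g = emb (vbasis i) * emb (vbasis j) - emb (vbasis j) * emb (vbasis i) - emb (br (vbasis i) (vbasis j))"
    have g: "g \<in> rels br" by (auto simp: g_def rels_def)
    have eq1: "Poly_Mapping.single (i # j # v) 1 = ?X j * Poly_Mapping.single (i # v) 1 + g * ?z + emb (br (vbasis i) (vbasis j)) * ?z"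
      by (simp add: g_def emb_vbasis algebra_simps single_mult_single)
    have insv: "ins i (j # v) = j # ins i v" using False by simp
    define r' where "r' = ?X j * r + emb (br (vbasis i) (vbasis j)) * ?z"
    have "Poly_Mapping.single (i # j # v) 1 - Poly_Mapping.single (ins i (j # v)) 1 - r'
        = ?X j * (Poly_Mapping.single (i # v) 1 - Poly_Mapping.single (ins i v) 1 - r) + 1 * g * ?z"
      using False by (simp add: eq1 insv r'_def algebra_simps single_mult_single)
    moreover have "\<dots> \<in> tid (rels br)" by (rule tidadd[OF tid_lmult[OF r(2)] tidg[OF g]])
    moreover have "deg_le (length (j # v)) r'"
      unfolding r'_def
      by (rule deg_le_add) (use deg_le_mult[OF deg_le_single[of "[j]" 1] r(1)] emb_single_deg in auto)
    ultimately show ?thesis by (auto simp: modI_def)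
  qed
qed

lemma spanning:
  fixes br :: "('i::finite \<Rightarrow> 'k::comm_ring_1) \<Rightarrow> ('i \<Rightarrow> 'k) \<Rightarrow> ('i \<Rightarrow> 'k)"
  shows "deg_le n P \<Longrightarrow> red n (rels br) P"
proof (induct n arbitrary: P)
  case 0
  have "ksrt P" using 0 by (auto simp: deg_le_def ksrt_def srt_def)
  then show ?case using 0 by (rule red_self)
next
  case (Suc n)
  have wr: "red (Suc n) (rels br) (Poly_Mapping.single w 1)" if w: "length w \<le> Suc n" for w
  proof (cases "length w \<le> n")
    case True
    have "red n (rels br) (Poly_Mapping.single w 1)"
      by (rule Suc.hyps) (rule deg_le_single, simp add: True)
    then show ?thesis by (rule red_mono) simp
  next
    case False
    then obtain i w' where w': "w = i # w'" "length w' = n" using w by (cases w) auto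
    obtain s where s: "ksrt s" "deg_le n s" "Poly_Mapping.single w' 1 - s \<in> tid (rels br)"
      using Suc.hyps[of "Poly_Mapping.single w' 1"] w' by (auto simp: red_def intro: deg_le_single)
    let ?X = "Poly_Mapping.single [i] (1::'k)"
    have d: "Poly_Mapping.single w 1 - ?X * s \<in> tid (rels br)"
      using tid_lmult[OF s(3), of ?X] by (simp add: w' right_diff_distrib X_single)
    have Xs: "?X * s = lext (\<lambda>v. Poly_Mapping.single (i # v) 1) s"
    proof -
      have "?X * s = ?X * lext (\<lambda>v. Poly_Mapping.single v 1) s" by (simp add: lext_id)
      also have "\<dots> = lext (\<lambda>v. ?X * Poly_Mapping.single v 1) s"
        by (rule lin_eqI[where P=s]) (auto simp: lext_add distrib_left sc_left_commute)
      finally show ?thesis by (simp add: X_single)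
    qed
    have "red (Suc n) (rels br) (?X * s)"
      unfolding Xs
    proof (rule red_lext)
      fix v assume v: "v \<in> keys s"
      then have sv: "srt v" and lv: "length v \<le> n" using s by (auto simp: ksrt_def deg_le_def)
      obtain r where r: "deg_le (length v) r" "Poly_Mapping.single (i # v) 1 - Poly_Mapping.single (ins i v) 1 - r \<in> tid (rels br)"
        using insert_step[OF sv, of br i] by (auto simp: modI_def)
      have "red (Suc n) (rels br) (Poly_Mapping.single (ins i v) 1 + r)"
        apply (rule red_add)
         apply (rule red_self)
          apply (simp add: ksrt_single srt_ins sv)
         apply (rule deg_le_single) using lv apply simp
        apply (rule red_mono[OF Suc.hyps]) using r(1) lv apply (auto intro: deg_le_mono)
        done
      then show "red (Suc n) (rels br) (Poly_Mapping.single (i # v) 1)"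
        by (rule red_ideal[rotated]) (use r(2) in \<open>simp add: algebra_simps\<close>)
    qed
    then show ?thesis by (rule red_ideal[OF d])
  qed
  have "red (Suc n) (rels br) (lext (\<lambda>w. Poly_Mapping.single w 1) P)"
    by (rule red_lext) (use Suc.prems wr in \<open>auto simp: deg_le_def\<close>)
  then show ?case by (simp add: lext_id)
qed


section \<open>Antipode\<close>

lift_definition anti :: "('i list \<Rightarrow>\<^sub>0 'k::comm_ring_1) \<Rightarrow> ('i list \<Rightarrow>\<^sub>0 'k)" is
  "\<lambda>p u. (-1) ^ length u * p (rev u)"
proof -
  fix p :: "'i list \<Rightarrow> 'k" assume "finite {x. p x \<noteq> 0}"
  then have "finite (rev ` {x. p x \<noteq> 0})" by simp
  moreover have "{u. (-1) ^ length u * p (rev u) \<noteq> 0} \<subseteq> rev ` {x. p x \<noteq> 0}"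
    by (auto intro!: image_eqI[where x="rev _"])
  ultimately show "finite {u. (-1) ^ length u * p (rev u) \<noteq> (0::'k)}" by (rule finite_subset[rotated])
qed

lemma lookup_anti: "lookup (anti P) u = (-1) ^ length u * lookup P (rev u)"
  by transfer simp

lemma anti_add: "anti (P + Q) = anti P + anti Q"
  by (rule poly_mapping_eqI) (simp add: lookup_anti lookup_add distrib_left)

lemma anti_single: "anti (Poly_Mapping.single u c) = Poly_Mapping.single (rev u) ((-1) ^ length u * c)"
  by (rule poly_mapping_eqI) (auto simp: lookup_anti lookup_single when_def)

lemma anti_mult: "anti (P * Q) = anti Q * anti P"
proof (rule lin_eqI[where P=P])
  fix u a
  show "anti (Poly_Mapping.single u a * Q) = anti Q * anti (Poly_Mapping.single u a)"
  proof (rule lin_eqI[where P=Q])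
    fix v b
    show "anti (Poly_Mapping.single u a * Poly_Mapping.single v b) =
      anti (Poly_Mapping.single v b) * anti (Poly_Mapping.single u a)"
      by (simp add: single_mult_single anti_single power_add mult_ac)
  qed (auto simp: distrib_left distrib_right anti_add)
qed (auto simp: distrib_left distrib_right anti_add)

lemma anti_zero[simp]: "anti 0 = 0"
  using anti_add[of 0 0] by simp

lemma anti_sum: "anti (sum g S) = (\<Sum>s\<in>S. anti (g s))"
  by (induct S rule: infinite_finite_induct) (auto simp: anti_add)

lemma anti_one[simp]: "anti 1 = (1::'i list \<Rightarrow>\<^sub>0 'k::comm_ring_1)"
proof -
  have "anti (Poly_Mapping.single [] 1) = Poly_Mapping.single [] (1::'k)" by (simp add: anti_single)
  then show ?thesis by (simp add: nil_zero)
qed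

lemma anti_emb: "anti (emb v) = - emb v"
  by (simp add: emb_def anti_single single_uminus anti_sum sum_negf)


fun whom :: "(('i::finite \<Rightarrow> 'k::comm_ring_1) \<Rightarrow> ('i \<Rightarrow> 'k)) \<Rightarrow> 'i list \<Rightarrow> ('i list \<Rightarrow>\<^sub>0 'k)" where
  "whom g [] = 1"
| "whom g (i # w) = emb (g (vbasis i)) * whom g w"

definition phiw :: "(('i::finite \<Rightarrow> 'k::field) \<Rightarrow> ('i \<Rightarrow> 'k)) \<Rightarrow> 'i list \<Rightarrow> ('i list \<Rightarrow>\<^sub>0 'k)" where
  "phiw R w = (\<Sum>S\<in>Pow {..<length w}. whom (R_plus R) (nths w S) *
       anti (whom (R_minus R) (nths w ({..<length w} - S))))"

definition Lx :: "(('i::finite \<Rightarrow> 'k::field) \<Rightarrow> ('i \<Rightarrow> 'k)) \<Rightarrow> ('i \<Rightarrow> 'k) \<Rightarrow> ('i list \<Rightarrow>\<^sub>0 'k) \<Rightarrow> ('i list \<Rightarrow>\<^sub>0 'k)" where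
  "Lx R v Q = emb (R_plus R v) * Q - Q * emb (R_minus R v)"

lemma pow_suc_eq: "Pow {..<Suc n} = (\<lambda>S. Suc ` S) ` Pow {..<n} \<union> (\<lambda>S. insert 0 (Suc ` S)) ` Pow {..<n}"
proof (rule set_eqI, rule iffI)
  fix T assume T: "T \<in> Pow {..<Suc n}"
  define S where "S = {j. Suc j \<in> T}"
  have S: "S \<in> Pow {..<n}" using T by (auto simp: S_def)
  have "T - {0} = Suc ` S"
  proof (rule set_eqI, rule iffI)
    fix x assume "x \<in> T - {0}" then show "x \<in> Suc ` S" by (cases x) (auto simp: S_def)
  qed (auto simp: S_def)
  then have "T = Suc ` S \<or> T = insert 0 (Suc ` S)" by blast
  then show "T \<in> (\<lambda>S. Suc ` S) ` Pow {..<n} \<union> (\<lambda>S. insert 0 (Suc ` S)) ` Pow {..<n}"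
    using S by blast
qed auto

lemma pow_suc_sum: "(\<Sum>T\<in>Pow {..<Suc n}. g T) = (\<Sum>S\<in>Pow {..<n}. g (Suc ` S)) + (\<Sum>S\<in>Pow {..<n}. g (insert 0 (Suc ` S)))"
proof -
  have i1: "inj_on (\<lambda>S. Suc ` S) (Pow {..<n})" by (rule inj_onI) (simp add: inj_image_eq_iff)
  have i2: "inj_on (\<lambda>S. insert 0 (Suc ` S)) (Pow {..<n})"
  proof (rule inj_onI)
    fix A B :: "nat set" assume h: "insert 0 (Suc ` A) = insert 0 (Suc ` B)"
    have "Suc ` A = insert 0 (Suc ` A) - {0}" by auto
    also have "\<dots> = insert 0 (Suc ` B) - {0}" by (simp only: h)
    also have "\<dots> = Suc ` B" by auto
    finally show "A = B" by (simp add: inj_image_eq_iff)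
  qed
  let ?A = "(\<lambda>S. Suc ` S) ` Pow {..<n}" and ?B = "(\<lambda>S. insert 0 (Suc ` S)) ` Pow {..<n}"
  have d: "?A \<inter> ?B = {}" by auto
  have "(\<Sum>T\<in>Pow {..<Suc n}. g T) = sum g (?A \<union> ?B)" by (simp only: pow_suc_eq)
  also have "\<dots> = sum g ?A + sum g ?B" by (rule sum.union_disjoint) (auto simp only: d finite_imageI finite_Pow_iff finite_lessThan)
  also have "sum g ?A = (\<Sum>S\<in>Pow {..<n}. g (Suc ` S))" by (simp add: sum.reindex[OF i1])
  also have "sum g ?B = (\<Sum>S\<in>Pow {..<n}. g (insert 0 (Suc ` S)))" by (simp add: sum.reindex[OF i2])
  finally show ?thesis .
qed

lemma suc_set: "{j. Suc j \<in> Suc ` S} = S" by auto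

lemma nths_suc: "nths (i # w) (Suc ` S) = nths w S"
  by (simp add: nths_Cons suc_set)
lemma nths_suc0: "nths (i # w) (insert 0 (Suc ` S)) = i # nths w S"
  by (simp add: nths_Cons suc_set)
lemma compl1: "{..<Suc n} - Suc ` S = insert 0 (Suc ` ({..<n} - S))"
  by (rule set_eqI) (case_tac x, auto)
lemma compl2: "{..<Suc n} - insert 0 (Suc ` S) = Suc ` ({..<n} - S)"
  by (rule set_eqI) (case_tac x, auto)

lemma phiw_nil[simp]: "phiw R [] = 1"
  by (simp add: phiw_def)

lemma phiw_cons: "phiw R (i # w) = Lx R (vbasis i) (phiw R w)"
proof -
  let ?n = "length w"
  let ?P = "whom (R_plus R)" and ?M = "whom (R_minus R)"
  have "phiw R (i # w) = (\<Sum>S\<in>Pow {..<?n}. ?P (nths (i # w) (Suc ` S)) * anti (?M (nths (i # w) ({..<Suc ?n} - Suc ` S))))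
     + (\<Sum>S\<in>Pow {..<?n}. ?P (nths (i # w) (insert 0 (Suc ` S))) * anti (?M (nths (i # w) ({..<Suc ?n} - insert 0 (Suc ` S)))))"
    unfolding phiw_def by (simp add: pow_suc_sum)
  also have "(\<Sum>S\<in>Pow {..<?n}. ?P (nths (i # w) (Suc ` S)) * anti (?M (nths (i # w) ({..<Suc ?n} - Suc ` S))))
      = - (phiw R w * emb (R_minus R (vbasis i)))"
    unfolding phiw_def sum_distrib_right sum_negf[symmetric]
    by (rule sum.cong) (auto simp: compl1 nths_suc nths_suc0 anti_mult anti_emb mult.assoc)
  also have "(\<Sum>S\<in>Pow {..<?n}. ?P (nths (i # w) (insert 0 (Suc ` S))) * anti (?M (nths (i # w) ({..<Suc ?n} - insert 0 (Suc ` S)))))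
      = emb (R_plus R (vbasis i)) * phiw R w"
    unfolding phiw_def sum_distrib_left
    by (rule sum.cong) (auto simp: compl2 nths_suc nths_suc0 mult.assoc)
  finally show ?thesis by (simp add: Lx_def)
qed


lemma klinear_Rplus: "klinear R \<Longrightarrow> klinear (R_plus (R::('i \<Rightarrow> 'k::field) \<Rightarrow> _))"
  unfolding klinear_def R_plus_def by (auto simp: fun_eq_iff add_divide_distrib algebra_simps)
lemma klinear_Rminus: "klinear R \<Longrightarrow> klinear (R_minus (R::('i \<Rightarrow> 'k::field) \<Rightarrow> _))"
  unfolding klinear_def R_minus_def by (auto simp: fun_eq_iff diff_divide_distrib add_divide_distrib algebra_simps)

lemma emb_sum: "emb (sum g S) = (\<Sum>s\<in>S. emb (g s))"
proof (induct S rule: infinite_finite_induct)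
  case (infinite A) then show ?case by (metis sum.infinite emb_zero)
next
  case empty then show ?case by (simp only: sum.empty emb_zero)
next
  case (insert x F) then show ?case by (simp add: sum.insert[OF insert(1,2)] emb_add del: plus_fun_apply)
qed

lemma emb_lin: fixes g :: "('i::finite \<Rightarrow> 'k::comm_ring_1) \<Rightarrow> ('i \<Rightarrow> 'k)" shows "klinear g \<Longrightarrow> emb (g x) = (\<Sum>i\<in>UNIV. sc (x i) * emb (g (vbasis i)))"
proof -
  assume g: "klinear g"
  have "g x = g (\<Sum>i\<in>UNIV. (\<lambda>t. x i * vbasis i t))" by (simp only: vec_expand[of x, symmetric])
  also have "\<dots> = (\<Sum>i\<in>UNIV. (\<lambda>t. x i * g (vbasis i) t))" by (simp add: klin_sum[OF g] klin_smul[OF g])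
  finally show ?thesis by (simp add: emb_sum emb_smul)
qed

lemma Lx_add: "Lx R v (P + Q) = Lx R v P + Lx R v Q"
  by (simp add: Lx_def algebra_simps)
lemma Lx_sc: "Lx R v (sc c * P) = sc c * Lx R v P"
  by (simp add: Lx_def sc_left_commute mult.assoc right_diff_distrib)
lemma Lx_zero[simp]: "Lx R v 0 = 0" by (simp add: Lx_def)

fun Lword where
  "Lword R [] Q = Q"
| "Lword R (i # w) Q = Lx R (vbasis i) (Lword R w Q)"

lemma Lword_add: "Lword R w (P + Q) = Lword R w P + Lword R w Q"
  by (induct w) (auto simp: Lx_add)
lemma Lword_sc: "Lword R w (sc c * P) = sc c * Lword R w P"
  by (induct w) (auto simp: Lx_sc)
lemma Lword_append: "Lword R (u @ v) Q = Lword R u (Lword R v Q)"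
  by (induct u) auto

lemma phiw_Lword: "phiw R w = Lword R w 1"
  by (induct w) (auto simp: phiw_cons)

definition LL where "LL R P Q = lext (\<lambda>w. Lword R w Q) P"
definition Phi where "Phi R P = lext (phiw R) P"

lemma Phi_LL: "Phi R P = LL R P 1"
  unfolding Phi_def LL_def by (rule lext_cong) (simp add: phiw_Lword)

lemma LL_add1: "LL R (P1 + P2) Q = LL R P1 Q + LL R P2 Q" by (simp add: LL_def lext_add)
lemma LL_diff1: "LL R (P1 - P2) Q = LL R P1 Q - LL R P2 Q" by (simp add: LL_def lext_diff)
lemma LL_single: "LL R (Poly_Mapping.single w c) Q = sc c * Lword R w Q" by (simp add: LL_def)
lemma LL_add2: "LL R P (Q1 + Q2) = LL R P Q1 + LL R P Q2"
  by (rule lin_eqI[where P=P]) (auto simp: LL_add1 LL_single Lword_add distrib_left)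

lemma LL_mult: "LL R (P1 * P2) Q = LL R P1 (LL R P2 Q)"
proof (rule lin_eqI[where P=P1])
  fix w c
  show "LL R (Poly_Mapping.single w c * P2) Q = LL R (Poly_Mapping.single w c) (LL R P2 Q)"
  proof (rule lin_eqI[where P=P2])
    fix v d
    show "LL R (Poly_Mapping.single w c * Poly_Mapping.single v d) Q =
          LL R (Poly_Mapping.single w c) (LL R (Poly_Mapping.single v d) Q)"
      by (simp add: single_mult_single LL_single Lword_append Lword_sc sc_assoc sc_mult)
  qed (auto simp: distrib_left LL_add1 LL_add2)
qed (auto simp: distrib_right LL_add1)

lemma Lx_vec: "klinear R \<Longrightarrow> Lx R x Q = (\<Sum>i\<in>UNIV. sc (x i) * Lx R (vbasis i) Q)"
proof -
  assume kR: "klinear R"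
  have "Lx R x Q = (\<Sum>i\<in>UNIV. sc (x i) * emb (R_plus R (vbasis i))) * Q - Q * (\<Sum>i\<in>UNIV. sc (x i) * emb (R_minus R (vbasis i)))"
    unfolding Lx_def by (simp only: emb_lin[OF klinear_Rplus[OF kR], of x] emb_lin[OF klinear_Rminus[OF kR], of x])
  also have "\<dots> = (\<Sum>i\<in>UNIV. sc (x i) * emb (R_plus R (vbasis i)) * Q - Q * (sc (x i) * emb (R_minus R (vbasis i))))"
    by (simp only: sum_distrib_right sum_distrib_left sum_subtractf)
  also have "\<dots> = (\<Sum>i\<in>UNIV. sc (x i) * Lx R (vbasis i) Q)"
    by (rule sum.cong) (simp_all only: Lx_def mult.assoc sc_left_commute right_diff_distrib)
  finally show ?thesis .
qed

lemma LL_emb: "klinear R \<Longrightarrow> LL R (emb x) Q = Lx R x Q"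
  by (simp add: emb_def LL_def lext_sum Lx_vec)

lemma Lx_tid: "Q \<in> tid G \<Longrightarrow> Lx R v Q \<in> tid G"
  unfolding Lx_def by (intro tid_diff tid_lmult tid_rmult)
lemma Lword_tid: "Q \<in> tid G \<Longrightarrow> Lword R w Q \<in> tid G"
  by (induct w) (auto intro: Lx_tid)
lemma LL_tid: "Q \<in> tid G \<Longrightarrow> LL R P Q \<in> tid G"
  unfolding LL_def by (rule tid_lext) (auto intro: Lword_tid)

section \<open>R_+ and R_- are Lie morphisms\<close>

lemma Rpm_hom:
  fixes br :: "('i \<Rightarrow> 'k::field) \<Rightarrow> ('i \<Rightarrow> 'k) \<Rightarrow> ('i \<Rightarrow> 'k)"
  assumes lb: "lie_bracket br" and cr: "classical_r_matrix br R"
  shows "R_plus R (bracket_R br R x y) = br (R_plus R x) (R_plus R y)"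
    and "R_minus R (bracket_R br R x y) = br (R_minus R x) (R_minus R y)"
proof -
  have kR: "klinear R" using cr unfolding classical_r_matrix_def by blast
  note l1 = lb_lin1[OF lb] and l2 = lb_lin2[OF lb]
  define B where "B = (\<lambda>i. br (R x) y i + br x (R y) i)"
  have cl0: "br (R x) (R y) = (\<lambda>i. R (\<lambda>j. br (R x) y j + br x (R y) j) i - br x y i)"
    using cr unfolding classical_r_matrix_def by blast
  have cl: "\<And>j. br (R x) (R y) j = R B j - br x y j"
    unfolding B_def cl0 by simp
  have bR: "bracket_R br R x y = (\<lambda>i. inverse 2 * B i)"
    unfolding bracket_R_def B_def by (rule ext) (simp only: divide_inverse_commute)
  have Rp: "\<And>v. R_plus R v = (\<lambda>i. inverse 2 * (\<lambda>i. R v i + v i) i)"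
    unfolding R_plus_def by (rule ext) (simp only: divide_inverse_commute)
  have Rm: "\<And>v. R_minus R v = (\<lambda>i. inverse 2 * (\<lambda>i. R v i - v i) i)"
    unfolding R_minus_def by (rule ext) (simp only: divide_inverse_commute)
  have bs: "\<And>c a b. br (\<lambda>i. c * a i) (\<lambda>i. c * b i) = (\<lambda>j. c * (c * br a b j))"
    by (simp add: klin_smul[OF l1] klin_smul[OF l2])
  have ad1: "\<And>a b c. br (\<lambda>i. a i + b i) c = (\<lambda>j. br a c j + br b c j)"
    using l2 by (simp add: klinear_def)
  have ad2: "\<And>a b c. br c (\<lambda>i. a i + b i) = (\<lambda>j. br c a j + br c b j)"
    using l1 by (simp add: klinear_def)
  have sb1: "\<And>a b c. br (\<lambda>i. a i - b i) c = (\<lambda>j. br a c j - br b c j)"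
    using klin_diff[OF l2] by (simp add: fun_diff_def)
  have sb2: "\<And>a b c. br c (\<lambda>i. a i - b i) = (\<lambda>j. br c a j - br c b j)"
    using klin_diff[OF l1] by (simp add: fun_diff_def)
  have Rs: "R (\<lambda>i. inverse 2 * B i) = (\<lambda>j. inverse 2 * R B j)" by (rule klin_smul[OF kR])
  show "R_plus R (bracket_R br R x y) = br (R_plus R x) (R_plus R y)"
  proof (rule ext)
    fix j
    show "R_plus R (bracket_R br R x y) j = br (R_plus R x) (R_plus R y) j"
      unfolding Rp bs bR ad1 ad2 Rs using cl[of j] by (simp add: B_def algebra_simps)
  qed
  show "R_minus R (bracket_R br R x y) = br (R_minus R x) (R_minus R y)"
  proof (rule ext)
    fix j
    show "R_minus R (bracket_R br R x y) j = br (R_minus R x) (R_minus R y) j"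
      unfolding Rm bs bR sb1 sb2 Rs using cl[of j] by (simp add: B_def algebra_simps)
  qed
qed

lemma LL_rel:
  fixes br :: "('i::finite \<Rightarrow> 'k::field) \<Rightarrow> ('i \<Rightarrow> 'k) \<Rightarrow> ('i \<Rightarrow> 'k)"
  assumes lb: "lie_bracket br" and cr: "classical_r_matrix br R" and r: "r \<in> rels (bracket_R br R)"
  shows "LL R r Q \<in> tid (rels br)"
proof -
  have kR: "klinear R" using cr unfolding classical_r_matrix_def by blast
  obtain x y where rxy: "r = emb x * emb y - emb y * emb x - emb (bracket_R br R x y)" using r unfolding rels_def by blast
  define xp where "xp = emb (R_plus R x)"
  define yp where "yp = emb (R_plus R y)"
  define xm where "xm = emb (R_minus R x)"
  define ym where "ym = emb (R_minus R y)"
  define bp where "bp = emb (R_plus R (bracket_R br R x y))"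
  define bm where "bm = emb (R_minus R (bracket_R br R x y))"
  define g1 where "g1 = xp * yp - yp * xp - bp"
  define g2 where "g2 = xm * ym - ym * xm - bm"
  have g1r: "g1 \<in> rels br" unfolding rels_def g1_def xp_def yp_def bp_def Rpm_hom[OF lb cr] by blast
  have g2r: "g2 \<in> rels br" unfolding rels_def g2_def xm_def ym_def bm_def Rpm_hom[OF lb cr] by blast
  have "LL R r Q = Lx R x (Lx R y Q) - Lx R y (Lx R x Q) - Lx R (bracket_R br R x y) Q"
    by (simp only: rxy LL_diff1 LL_mult LL_emb[OF kR])
  also have "\<dots> = (xp * (yp * Q - Q * ym) - (yp * Q - Q * ym) * xm) - (yp * (xp * Q - Q * xm) - (xp * Q - Q * xm) * ym)
      - (bp * Q - Q * bm)"
    by (simp only: Lx_def xp_def yp_def xm_def ym_def bp_def bm_def)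
  also have "\<dots> = 1 * g1 * Q - Q * g2 * 1"
    unfolding g1_def g2_def by (simp add: algebra_simps)
  finally show ?thesis using tid_diff[OF tidg[OF g1r, of 1 Q] tidg[OF g2r, of Q 1]] by simp
qed

lemma Phi_tid:
  fixes br :: "('i::finite \<Rightarrow> 'k::field) \<Rightarrow> ('i \<Rightarrow> 'k) \<Rightarrow> ('i \<Rightarrow> 'k)"
  assumes lb: "lie_bracket br" and cr: "classical_r_matrix br R"
  shows "P \<in> tid (rels (bracket_R br R)) \<Longrightarrow> Phi R P \<in> tid (rels br)"
proof (induct rule: tid.induct)
  case tid0 then show ?case by (simp add: Phi_def tid.tid0)
next
  case (tidg g a b)
  have "LL R g (LL R b 1) \<in> tid (rels br)" by (rule LL_rel[OF lb cr tidg])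
  then show ?case by (simp add: Phi_LL LL_mult LL_tid)
next
  case (tidadd p q) then show ?case by (simp add: Phi_def lext_add tid.tidadd)
qed


lemma modI_add: "modI n G P \<Longrightarrow> modI n G Q \<Longrightarrow> modI n G (P + Q)"
  unfolding modI_def
proof (elim exE conjE)
  fix s t assume "deg_le n s" "P - s \<in> tid G" "deg_le n t" "Q - t \<in> tid G"
  then show "\<exists>u. deg_le n u \<and> P + Q - u \<in> tid G"
    by (intro exI[of _ "s + t"]) (auto intro: deg_le_add dest: tidadd simp: algebra_simps)
qed
lemma modI_sc: "modI n G P \<Longrightarrow> modI n G (sc c * P)"
  unfolding modI_def
proof (elim exE conjE)
  fix s assume "deg_le n s" "P - s \<in> tid G"
  then show "\<exists>u. deg_le n u \<and> sc c * P - u \<in> tid G"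
    by (intro exI[of _ "sc c * s"]) (auto intro: deg_le_sc dest: tid_lmult[where c="sc c"] simp: right_diff_distrib)
qed
lemma modI_zero: "modI n G 0" unfolding modI_def by (rule exI[of _ 0]) (simp add: tid.tid0)
lemma modI_sum: "(\<And>s. s \<in> S \<Longrightarrow> modI n G (g s)) \<Longrightarrow> modI n G (sum g S)"
  by (induct S rule: infinite_finite_induct) (auto intro: modI_add modI_zero)
lemma modI_lext: "(\<And>w. w \<in> keys P \<Longrightarrow> modI n G (g w)) \<Longrightarrow> modI n G (lext g P)"
  unfolding lext_def by (rule modI_sum) (auto intro: modI_sc)
lemma modI_mono: "modI m G P \<Longrightarrow> m \<le> n \<Longrightarrow> modI n G P"
  unfolding modI_def by (auto intro: deg_le_mono)

lemma comm_word:
  fixes br :: "('i::finite \<Rightarrow> 'k::comm_ring_1) \<Rightarrow> ('i \<Rightarrow> 'k) \<Rightarrow> ('i \<Rightarrow> 'k)"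
  shows "modI (length u) (rels br) (emb y * Poly_Mapping.single u 1 - Poly_Mapping.single u 1 * emb y)"
proof (induct u)
  case Nil then show ?case using modI_zero by (simp add: nil_zero)
next
  case (Cons a u)
  obtain r where r: "deg_le (length u) r" "emb y * Poly_Mapping.single u 1 - Poly_Mapping.single u 1 * emb y - r \<in> tid (rels br)"
    using Cons by (auto simp: modI_def)
  let ?X = "Poly_Mapping.single [a] (1::'k)" and ?z = "Poly_Mapping.single u (1::'k)"
  define g where "g = emb y * emb (vbasis a) - emb (vbasis a) * emb y - emb (br y (vbasis a))"
  have g: "g \<in> rels br" unfolding g_def rels_def by blast
  define r' where "r' = emb (br y (vbasis a)) * ?z + ?X * r"
  have za: "Poly_Mapping.single (a # u) 1 = ?X * ?z" by (simp add: single_mult_single)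
  have "emb y * Poly_Mapping.single (a # u) 1 - Poly_Mapping.single (a # u) 1 * emb y - r'
      = 1 * g * ?z + ?X * (emb y * ?z - ?z * emb y - r)"
    unfolding za r'_def g_def emb_vbasis by (simp add: algebra_simps)
  moreover have "\<dots> \<in> tid (rels br)" by (rule tidadd[OF tidg[OF g] tid_lmult[OF r(2)]])
  moreover have "deg_le (length (a # u)) r'"
    unfolding r'_def by (rule deg_le_add) (use emb_single_deg deg_le_mult[OF deg_le_single[of "[a]" 1] r(1)] in auto)
  ultimately have "emb y * Poly_Mapping.single (a # u) 1 - Poly_Mapping.single (a # u) 1 * emb y - r' \<in> tid (rels br)"
    "deg_le (length (a # u)) r'" by simp_all
  then show ?case unfolding modI_def by blast
qed

lemma comm_mod:
  fixes br :: "('i::finite \<Rightarrow> 'k::comm_ring_1) \<Rightarrow> ('i \<Rightarrow> 'k) \<Rightarrow> ('i \<Rightarrow> 'k)"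
  assumes "deg_le n P"
  shows "modI n (rels br) (emb y * P - P * emb y)"
proof -
  have e: "emb y * P - P * emb y = lext (\<lambda>w. emb y * Poly_Mapping.single w 1 - Poly_Mapping.single w 1 * emb y) P"
  proof (rule lin_eqI[where P=P])
    fix w :: "'i list" and c :: 'k
    have "Poly_Mapping.single w c = sc c * Poly_Mapping.single w (1::'k)" by (simp add: sc_single)
    then show "emb y * Poly_Mapping.single w c - Poly_Mapping.single w c * emb y =
       lext (\<lambda>w. emb y * Poly_Mapping.single w 1 - Poly_Mapping.single w 1 * emb y) (Poly_Mapping.single w c)"
      by (simp only: lext_sc lext_single sc_1 mult_1_left sc_left_commute mult.assoc right_diff_distrib)
  qed (simp_all add: lext_add algebra_simps)
  show ?thesis unfolding e
    by (rule modI_lext) (use assms comm_word modI_mono in \<open>fastforce simp: deg_le_def\<close>)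
qed

lemma deg_Lx: "deg_le n Q \<Longrightarrow> deg_le (Suc n) (Lx R v Q)"
  unfolding Lx_def
  using deg_le_mult[OF deg_le_emb, of n Q "R_plus R v"] deg_le_mult[OF _ deg_le_emb, of n Q "R_minus R v"]
  by (auto intro: deg_le_diff)

lemma deg_phiw: "deg_le (length w) (phiw R w)"
proof (induct w)
  case Nil then show ?case by (simp add: deg_le_def zero_list_def)
next
  case (Cons i w) then show ?case by (simp add: phiw_cons deg_Lx)
qed

definition deg_lt :: "nat \<Rightarrow> ('i list \<Rightarrow>\<^sub>0 'k::zero) \<Rightarrow> bool" where
  "deg_lt n P \<longleftrightarrow> (\<forall>w\<in>keys P. length w < n)"

lemma deg_lt_add: "deg_lt n P \<Longrightarrow> deg_lt n Q \<Longrightarrow> deg_lt n (P + Q)"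
  using keys_add[of P Q] by (auto simp: deg_lt_def)
lemma deg_lt_Suc: "deg_lt (Suc n) P \<longleftrightarrow> deg_le n P"
  by (auto simp: deg_lt_def deg_le_def)
lemma deg_lt_0: "deg_lt 0 P \<longleftrightarrow> P = 0"
  by (auto simp: deg_lt_def)
lemma deg_lt_X: "deg_lt n r \<Longrightarrow> deg_lt (Suc n) (Poly_Mapping.single [i] (1::'k::comm_ring_1) * r)"
  unfolding deg_lt_def
proof
  fix v assume r: "\<forall>w\<in>keys r. length w < n" and v: "v \<in> keys (Poly_Mapping.single [i] (1::'k) * r)"
  then obtain a b where "v = a + b" "a \<in> keys (Poly_Mapping.single [i] (1::'k))" "b \<in> keys r"
    using keys_mult[of "Poly_Mapping.single [i] (1::'k)" r] by blast
  then show "length v < Suc n" using r by (auto simp: plus_list_def)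
qed
lemma deg_lt_mono: "deg_lt m P \<Longrightarrow> m \<le> n \<Longrightarrow> deg_lt n P"
  by (auto simp: deg_lt_def)
lemma deg_lt_sc: "deg_lt n P \<Longrightarrow> deg_lt n (sc c * P)"
  by (auto simp: deg_lt_def in_keys_iff)
lemma deg_lt_zero[simp]: "deg_lt n 0" by (simp add: deg_lt_def)
lemma deg_lt_sum: "(\<And>s. s \<in> S \<Longrightarrow> deg_lt n (g s)) \<Longrightarrow> deg_lt n (sum g S)"
  by (induct S rule: infinite_finite_induct) (auto intro: deg_lt_add)
lemma deg_lt_lext: "(\<And>w. w \<in> keys P \<Longrightarrow> deg_lt n (f w)) \<Longrightarrow> deg_lt n (lext f P)"
  unfolding lext_def by (rule deg_lt_sum) (auto intro: deg_lt_sc)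

lemma Rplus_minus: "R_plus R v = R_minus R v + (v::'i \<Rightarrow> 'k::field_char_0)"
  by (simp add: R_plus_def R_minus_def fun_eq_iff field_simps)

lemma lead:
  fixes br :: "('i::finite \<Rightarrow> 'k::field_char_0) \<Rightarrow> ('i \<Rightarrow> 'k) \<Rightarrow> ('i \<Rightarrow> 'k)"
  shows "\<exists>r. deg_lt (length w) r \<and> phiw R w - Poly_Mapping.single w 1 - r \<in> tid (rels br)"
proof (induct w)
  case Nil
  have "phiw R [] - Poly_Mapping.single [] 1 - 0 = (0::'i list \<Rightarrow>\<^sub>0 'k)"
    by (simp add: sc_def[symmetric])
  then show ?case by (intro exI[of _ 0]) (simp add: tid.tid0)
next
  case (Cons i w)
  obtain r where r: "deg_lt (length w) r" "phiw R w - Poly_Mapping.single w 1 - r \<in> tid (rels br)"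
    using Cons by blast
  let ?X = "Poly_Mapping.single [i] (1::'k)" and ?P = "phiw R w" and ?m = "emb (R_minus R (vbasis i))"
  obtain r1 where r1: "deg_le (length w) r1" "?m * ?P - ?P * ?m - r1 \<in> tid (rels br)"
    using comm_mod[OF deg_phiw, where br=br and y="R_minus R (vbasis i)"] by (auto simp: modI_def)
  have ph: "phiw R (i # w) = ?X * ?P + (?m * ?P - ?P * ?m)"
    by (simp add: phiw_cons Lx_def Rplus_minus emb_add emb_vbasis algebra_simps)
  have eq: "phiw R (i # w) - Poly_Mapping.single (i # w) 1 - (?X * r + r1)
      = ?X * (?P - Poly_Mapping.single w 1 - r) + (?m * ?P - ?P * ?m - r1)"
    unfolding ph by (simp add: algebra_simps single_mult_single)
  have mem: "?X * (?P - Poly_Mapping.single w 1 - r) + (?m * ?P - ?P * ?m - r1) \<in> tid (rels br)"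
    by (rule tidadd[OF tid_lmult[OF r(2)] r1(2)])
  have dg: "deg_lt (length (i # w)) (?X * r + r1)"
    using deg_lt_X[OF r(1)] r1(1) by (auto intro: deg_lt_add simp: deg_lt_Suc[symmetric])
  have "phiw R (i # w) - Poly_Mapping.single (i # w) 1 - (?X * r + r1) \<in> tid (rels br)"
    by (simp only: eq mem)
  with dg show ?case by blast
qed

lemma lext_fdiff: "lext (\<lambda>w. f w - g w) P = lext f P - lext g P"
  by (simp add: lext_def right_diff_distrib sum_subtractf)

lemma Phi_lext_lead:
  fixes br :: "('i::finite \<Rightarrow> 'k::field_char_0) \<Rightarrow> ('i \<Rightarrow> 'k) \<Rightarrow> ('i \<Rightarrow> 'k)"
  assumes "deg_le n s"
  shows "\<exists>t. deg_lt n t \<and> Phi R s - s - t \<in> tid (rels br)"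
proof -
  have "\<forall>w. \<exists>r. deg_lt (length w) r \<and> phiw R w - Poly_Mapping.single w 1 - r \<in> tid (rels br)"
    using lead by blast
  then obtain rr where rr: "\<And>w. deg_lt (length w) (rr w) \<and> phiw R w - Poly_Mapping.single w 1 - rr w \<in> tid (rels br)"
    by metis
  have "Phi R s - s - lext rr s = lext (\<lambda>w. phiw R w - Poly_Mapping.single w 1 - rr w) s"
    unfolding lext_fdiff Phi_def by (simp add: lext_id)
  moreover have "\<dots> \<in> tid (rels br)" by (rule tid_lext) (use rr in blast)
  moreover have "deg_lt n (lext rr s)"
    by (rule deg_lt_lext) (use rr assms in \<open>auto simp: deg_le_def intro: deg_lt_mono\<close>)
  ultimately have "Phi R s - s - lext rr s \<in> tid (rels br)" "deg_lt n (lext rr s)" by simp_all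
  then show ?thesis by blast
qed

lemma Phi_diff: "Phi R (P - Q) = Phi R P - Phi R Q" by (simp add: Phi_def lext_diff)

lemma exist_sorted:
  fixes br :: "('i::finite \<Rightarrow> 'k::field_char_0) \<Rightarrow> ('i \<Rightarrow> 'k) \<Rightarrow> ('i \<Rightarrow> 'k)"
  shows "ksrt s \<Longrightarrow> deg_le n s \<Longrightarrow> \<exists>A. Phi R A - s \<in> tid (rels br)"
proof (induct n arbitrary: s rule: less_induct)
  case (less n)
  obtain t where t: "deg_lt n t" "Phi R s - s - t \<in> tid (rels br)"
    using Phi_lext_lead[OF less.prems(2), of R br] by blast
  show ?case
  proof (cases n)
    case 0
    then have "t = 0" using t(1) by (simp add: deg_lt_0)
    then show ?thesis using t(2) by auto
  next
    case (Suc m)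
    then have "deg_le m t" using t(1) by (simp add: deg_lt_Suc)
    then obtain t' where t': "ksrt t'" "deg_le m t'" "t - t' \<in> tid (rels br)"
      using spanning[of m t br] by (auto simp: red_def)
    obtain B where B: "Phi R B - t' \<in> tid (rels br)" using less.hyps[OF _ t'(1,2)] Suc by auto
    have eq: "Phi R (s - B) - s = (Phi R s - s - t) + (t - t') - (Phi R B - t')"
      by (simp add: Phi_diff algebra_simps)
    have mem: "(Phi R s - s - t) + (t - t') - (Phi R B - t') \<in> tid (rels br)" by (intro tid_diff tidadd t(2) t'(3) B)
    have "Phi R (s - B) - s \<in> tid (rels br)" by (simp only: eq mem)
    then show ?thesis by blast
  qed
qed

lemma existence:
  fixes br :: "('i::finite \<Rightarrow> 'k::field_char_0) \<Rightarrow> ('i \<Rightarrow> 'k) \<Rightarrow> ('i \<Rightarrow> 'k)"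
  shows "\<exists>A'. Phi R A' - A \<in> tid (rels br)"
proof -
  obtain n where n: "deg_le n A" using deg_le_ex by blast
  obtain s where s: "ksrt s" "deg_le n s" "A - s \<in> tid (rels br)" using spanning[OF n, of br] by (auto simp: red_def)
  obtain A' where A': "Phi R A' - s \<in> tid (rels br)" using exist_sorted[OF s(1,2)] by blast
  have eq: "Phi R A' - A = (Phi R A' - s) - (A - s)" by simp
  have "Phi R A' - A \<in> tid (rels br)" unfolding eq by (rule tid_diff[OF A' s(3)])
  then show ?thesis by blast
qed

lemma uniq_sorted:
  fixes br :: "('i::finite \<Rightarrow> 'k::field_char_0) \<Rightarrow> ('i \<Rightarrow> 'k) \<Rightarrow> ('i \<Rightarrow> 'k)"
  assumes lb: "lie_bracket br"
  shows "ksrt s \<Longrightarrow> deg_le n s \<Longrightarrow> Phi R s \<in> tid (rels br) \<Longrightarrow> s = 0"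
proof (induct n arbitrary: s rule: less_induct)
  case (less n)
  interpret pbwL br by unfold_locales (rule lb)
  obtain t where t: "deg_lt n t" "Phi R s - s - t \<in> tid (rels br)"
    using Phi_lext_lead[OF less.prems(2), of R br] by blast
  show ?case
  proof (cases n)
    case 0
    then have "t = 0" using t(1) by (simp add: deg_lt_0)
    then have "s \<in> tid (rels br)" using tid_diff[OF less.prems(3) t(2)] by simp
    then show ?thesis using pbw_indep less.prems(1) by blast
  next
    case (Suc m)
    then have "deg_le m t" using t(1) by (simp add: deg_lt_Suc)
    then obtain t' where t': "ksrt t'" "deg_le m t'" "t - t' \<in> tid (rels br)"
      using spanning[of m t br] by (auto simp: red_def)
    have eq: "s + t' = Phi R s - (Phi R s - s - t) - (t - t')" by (simp add: algebra_simps)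
    have "s + t' \<in> tid (rels br)" unfolding eq by (intro tid_diff less.prems(3) t(2) t'(3))
    then have "s + t' = 0" using pbw_indep ksrt_add[OF less.prems(1) t'(1)] by blast
    then have st: "s = - t'" by (simp add: eq_neg_iff_add_eq_0)
    then have "deg_le m s" using t'(2) by simp
    then show ?thesis using less.hyps[of m s] Suc less.prems by simp
  qed
qed

lemma uniqueness:
  fixes br :: "('i::finite \<Rightarrow> 'k::field_char_0) \<Rightarrow> ('i \<Rightarrow> 'k) \<Rightarrow> ('i \<Rightarrow> 'k)"
  assumes lb: "lie_bracket br" and cr: "classical_r_matrix br R"
    and h: "Phi R B \<in> tid (rels br)"
  shows "B \<in> tid (rels (bracket_R br R))"
proof -
  obtain n where n: "deg_le n B" using deg_le_ex by blast
  obtain s where s: "ksrt s" "deg_le n s" "B - s \<in> tid (rels (bracket_R br R))"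
    using spanning[OF n, of "bracket_R br R"] by (auto simp: red_def)
  have "Phi R (B - s) \<in> tid (rels br)" by (rule Phi_tid[OF lb cr s(3)])
  have eq: "Phi R s = Phi R B - Phi R (B - s)" by (simp add: Phi_diff)
  have "Phi R s \<in> tid (rels br)" unfolding eq by (rule tid_diff[OF h \<open>Phi R (B - s) \<in> tid (rels br)\<close>])
  then have "s = 0" by (rule uniq_sorted[OF lb s(1,2)])
  then show ?thesis using s(3) by simp
qed


lemma fsupp_lookup[simp]: "fsupp (lookup P)"
  by (simp add: fsupp_def)

lemma lookup_Abs_fsupp[simp]: "fsupp p \<Longrightarrow> lookup (Abs_poly_mapping p) = p"
  by (simp add: fsupp_def)

lemma Abs_lookup[simp]: "Abs_poly_mapping (lookup P) = P"
  by (rule lookup_inverse)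

lemma lookup_single_mult:
  fixes Q :: "'i list \<Rightarrow>\<^sub>0 'k::comm_ring_1"
  shows "lookup (Poly_Mapping.single u a * Q) = (\<lambda>w. if take (length u) w = u then a * lookup Q (drop (length u) w) else 0)"
proof (rule lin_eqI[where P=Q])
  fix v b
  show "lookup (Poly_Mapping.single u a * Poly_Mapping.single v b) =
    (\<lambda>w. if take (length u) w = u then a * lookup (Poly_Mapping.single v b) (drop (length u) w) else 0)"
    by (rule ext) (auto simp: single_mult_single lookup_single when_def append_eq_conv_conj)
qed (auto simp: distrib_left lookup_add fun_eq_iff plus_fun_def)

lemma fa_mult_single:
  fixes a :: "'k::comm_ring_1"
  shows "fa_mult (lookup (Poly_Mapping.single u a)) q = (\<lambda>w. if take (length u) w = u then a * q (drop (length u) w) else 0)"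
proof (rule ext)
  fix w
  have "fa_mult (lookup (Poly_Mapping.single u a)) q w = (\<Sum>k\<le>length w. if k = length u \<and> take k w = u then a * q (drop k w) else 0)"
    unfolding fa_mult_def
    by (rule sum.cong) (auto simp: lookup_single when_def dest: arg_cong[where f=length])
  also have "\<dots> = (if take (length u) w = u then a * q (drop (length u) w) else 0)"
  proof (cases "take (length u) w = u")
    case True
    have "w = u @ drop (length u) w" using True by (metis append_take_drop_id)
    then have "length u \<le> length w" by (metis le_add1 length_append)
    have "(\<Sum>k\<le>length w. if k = length u \<and> take k w = u then a * q (drop k w) else 0)
        = (\<Sum>k\<le>length w. if k = length u then a * q (drop k w) else 0)"
      by (rule sum.cong) (auto simp: True)
    then show ?thesis using True \<open>length u \<le> length w\<close> by (simp add: sum.delta)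
  next
    case False then show ?thesis by (intro trans[OF sum.neutral]) auto
  qed
  finally show "fa_mult (lookup (Poly_Mapping.single u a)) q w = (if take (length u) w = u then a * q (drop (length u) w) else 0)" .
qed

lemma fa_mult_lookup: "fa_mult (lookup P) (lookup Q) = lookup (P * (Q::'i list \<Rightarrow>\<^sub>0 'k::comm_ring_1))"
proof (rule lin_eqI[where P=P])
  fix u a
  show "fa_mult (lookup (Poly_Mapping.single u a)) (lookup Q) = lookup (Poly_Mapping.single u a * Q)"
    by (simp add: fa_mult_single lookup_single_mult)
qed (auto simp: fa_mult_def lookup_add distrib_right sum.distrib fun_eq_iff plus_fun_def)

lemma fa_mult_Abs: "fsupp p \<Longrightarrow> fsupp q \<Longrightarrow> fa_mult p q = lookup (Abs_poly_mapping p * Abs_poly_mapping q)"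
  using fa_mult_lookup[of "Abs_poly_mapping p" "Abs_poly_mapping q"] by simp

lemma fa_one_lookup: "fa_one = lookup (1 :: 'i list \<Rightarrow>\<^sub>0 'k::comm_ring_1)"
  by (auto simp: fa_one_def lookup_one zero_list_def fun_eq_iff)

lemma fa_emb_lookup: "fa_emb v = lookup (emb v)"
  by (simp add: fun_eq_iff lookup_emb)

lemma fa_add_lookup: "fa_add (lookup P) (lookup Q) = lookup (P + Q)"
  by (simp add: fa_add_def fun_eq_iff lookup_add)
lemma fa_diff_lookup: "fa_diff (lookup P) (lookup Q) = lookup (P - Q)"
  by (simp add: fa_diff_def fun_eq_iff lookup_minus)

lemma lie_rel_eq: "lie_rel br = lookup ` rels br"
  unfolding lie_rel_def rels_def
  by (auto simp: fa_emb_lookup fa_mult_lookup fa_diff_lookup)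

lemma fa_ideal_to_tid: "p \<in> fa_ideal (lookup ` H) \<Longrightarrow> fsupp p \<and> Abs_poly_mapping p \<in> tid H"
proof (induct rule: fa_ideal.induct)
  case zero then show ?case by (simp add: fsupp_def tid.tid0)
next
  case (gen g a b)
  then obtain h where h: "h \<in> H" "g = lookup h" by blast
  have "fa_mult (fa_mult a g) b = lookup (Abs_poly_mapping a * h * Abs_poly_mapping b)"
    using gen h by (simp add: fa_mult_Abs)
  then show ?case using tidg[OF h(1)] by simp
next
  case (add p q)
  then have "fa_add p q = lookup (Abs_poly_mapping p + Abs_poly_mapping q)"
    by (metis fa_add_lookup lookup_Abs_fsupp)
  then show ?case using add by (simp add: tid.tidadd)
qed

lemma tid_to_fa_ideal: "P \<in> tid H \<Longrightarrow> lookup P \<in> fa_ideal (lookup ` H)"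
proof (induct rule: tid.induct)
  case tid0
  have "lookup (0::'a list \<Rightarrow>\<^sub>0 'b) = (\<lambda>_. 0)" by (simp add: fun_eq_iff)
  then show ?case using fa_ideal.zero by metis
next
  case (tidg g a b)
  have "lookup (a * g * b) = fa_mult (fa_mult (lookup a) (lookup g)) (lookup b)"
    by (simp add: fa_mult_lookup)
  then show ?case using fa_ideal.gen[of "lookup g" "lookup ` H" "lookup a" "lookup b"] tidg by simp
next
  case (tidadd p q)
  then show ?case using fa_ideal.add by (metis fa_add_lookup)
qed

lemma ueq_iff: "fsupp p \<Longrightarrow> fsupp q \<Longrightarrow> ueq br p q \<longleftrightarrow> Abs_poly_mapping p - Abs_poly_mapping q \<in> tid (rels br)"
proof -
  assume p: "fsupp p" and q: "fsupp q"
  have e: "fa_diff p q = lookup (Abs_poly_mapping p - Abs_poly_mapping q)"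
    using fa_diff_lookup[of "Abs_poly_mapping p" "Abs_poly_mapping q"] p q by simp
  show ?thesis
    unfolding ueq_def e lie_rel_eq
    using fa_ideal_to_tid[of "lookup (Abs_poly_mapping p - Abs_poly_mapping q)" "rels br"] tid_to_fa_ideal by fastforce
qed

lemma word_hom_lookup: "word_hom f w = lookup (whom f w)"
  by (induct w) (auto simp: fa_one_lookup fa_emb_lookup fa_mult_lookup)

lemma antipode_lookup: "antipode (lookup P) = lookup (anti P)"
  by (simp add: antipode_def fun_eq_iff lookup_anti)

lemma factor_map_eq: "fsupp p \<Longrightarrow> factor_map R p = lookup (Phi R (Abs_poly_mapping p))"
proof -
  assume p: "fsupp p"
  have k: "keys (Abs_poly_mapping p) = {w. p w \<noteq> 0}" using p by (simp add: keys_def fsupp_def)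
  show ?thesis
    unfolding factor_map_def Phi_def lext_def k
    by (rule ext) (simp add: lookup_sum word_hom_lookup antipode_lookup fa_mult_lookup phiw_def p)
qed

theorem mainTheorem9:
  fixes br :: "('i::finite \<Rightarrow> 'k::real_normed_field) \<Rightarrow> ('i \<Rightarrow> 'k) \<Rightarrow> ('i \<Rightarrow> 'k)"
    and R :: "('i \<Rightarrow> 'k) \<Rightarrow> ('i \<Rightarrow> 'k)"
  assumes "lie_bracket br"
    and "classical_r_matrix br R"
    and "fsupp A"
  shows "\<exists>A'. fsupp A' \<and> ueq br (factor_map R A') A \<and>
           (\<forall>A''. fsupp A'' \<and> ueq br (factor_map R A'') A \<longrightarrow> ueq (bracket_R br R) A'' A')"
proof -
  obtain B where B: "Phi R B - Abs_poly_mapping A \<in> tid (rels br)"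
    using existence[where R=R and A="Abs_poly_mapping A" and br=br] by blast
  show ?thesis
  proof (intro exI conjI allI impI)
    show "fsupp (lookup B)" by simp
    show "ueq br (factor_map R (lookup B)) A"
      using B assms(3) by (simp add: factor_map_eq ueq_iff)
  next
    fix A'' assume h: "fsupp A'' \<and> ueq br (factor_map R A'') A"
    then have "ueq br (lookup (Phi R (Abs_poly_mapping A''))) A" using factor_map_eq by metis
    then have h1: "Phi R (Abs_poly_mapping A'') - Abs_poly_mapping A \<in> tid (rels br)"
      using ueq_iff[OF fsupp_lookup assms(3)] by simp
    have "Phi R (Abs_poly_mapping A'' - B) = (Phi R (Abs_poly_mapping A'') - Abs_poly_mapping A) - (Phi R B - Abs_poly_mapping A)"
      by (simp add: Phi_diff)
    then have "Phi R (Abs_poly_mapping A'' - B) \<in> tid (rels br)" using tid_diff[OF h1 B] by simp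
    then have "Abs_poly_mapping A'' - B \<in> tid (rels (bracket_R br R))"
      by (rule uniqueness[OF assms(1,2)])
    then show "ueq (bracket_R br R) A'' (lookup B)" using h by (simp add: ueq_iff)
  qed
qed


end
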